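(* Let $H$ be a connected graph on $t\ge 2$ vertices. If $h_H(\mathbf{x};K_q)$ has M-convex support for some $q\ge t$, then $h_H(\mathbf{x};G)$ has M-convex support for every antiferromagnetic weighted graph $G$.
   Context: A weighted graph $G$ on $[n]$ is a symmetric matrix with nonnegative entries $G(i,j)$ (loops allowed); it is antiferromagnetic if it has at most one positive eigenvalue, counted with multiplicity. $K_q$ is the loopless complete graph on $q$ vertices with $\{0,1\}$ weights. For a graph $H$, the $G$-chromatic function is the polynomial in $\mathbf{x}=(x_1,\dots,x_n)$ \[h_H(\mathbf{x};G)=\sum_{\phi:V(H)\to[n]}\prod_{uv\in E(H)}G(\phi(u),\phi(v))\prod_{v\in V(H)}x_{\phi(v)}.\] The support of a polynomial is the set of exponent vectors in $\mathbb{N}_0^n$ of monomials with nonzero coefficient. A set $S\subseteq\mathbb{N}_0^n$ is M-convex if for all $\mathbf{a},\mathbf{b}\in S$ and every $i$ with $a_i>b_i$ there is $j$ with $a_j<b_j$ and $\mathbf{a}-\mathbf{e}_i+\mathbf{e}_j\in S$. *)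

theory Defs
  imports "Jordan_Normal_Form.Char_Poly" "HOL-Library.FuncSet"
begin

definition weighted_graph :: "nat \<Rightarrow> real mat \<Rightarrow> bool" where
  "weighted_graph n G \<longleftrightarrow> G \<in> carrier_mat n n \<and> transpose_mat G = G \<and>
     (\<forall>i<n. \<forall>j<n. G $$ (i, j) \<ge> 0)"

definition num_pos_eigenvalues :: "real mat \<Rightarrow> nat" where
  "num_pos_eigenvalues G =
     (\<Sum>x\<in>{x. x > 0 \<and> poly (char_poly G) x = 0}. order x (char_poly G))"

definition antiferromagnetic :: "nat \<Rightarrow> real mat \<Rightarrow> bool" where
  "antiferromagnetic n G \<longleftrightarrow> weighted_graph n G \<and> num_pos_eigenvalues G \<le> 1"

definition complete_graph :: "nat \<Rightarrow> real mat" where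
  "complete_graph q = mat q q (\<lambda>(i, j). if i = j then 0 else 1)"

text \<open>A simple graph H on vertex set {0..<t}: each edge {u,v} listed once as (u,v) with u<v.\<close>
definition simple_graph :: "nat \<Rightarrow> (nat \<times> nat) set \<Rightarrow> bool" where
  "simple_graph t E \<longleftrightarrow> E \<subseteq> {(u, v). u < v \<and> v < t}"

definition connected_graph :: "nat \<Rightarrow> (nat \<times> nat) set \<Rightarrow> bool" where
  "connected_graph t E \<longleftrightarrow>
     (\<forall>u<t. \<forall>v<t. (\<lambda>x y. (x, y) \<in> E \<or> (y, x) \<in> E)\<^sup>*\<^sup>* u v)"

text \<open>Coefficient of the monomial x^a in h_H(x;G), where H = ({0..<t},E) and G is on [n].\<close>
definition hcoeff :: "nat \<Rightarrow> (nat \<times> nat) set \<Rightarrow> nat \<Rightarrow> real mat \<Rightarrow> (nat \<Rightarrow> nat) \<Rightarrow> real" where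
  "hcoeff t E n G a =
     (\<Sum>\<phi>\<in>{0..<t} \<rightarrow>\<^sub>E {0..<n}.
        if (\<forall>i<n. card {v\<in>{0..<t}. \<phi> v = i} = a i)
        then (\<Prod>(u, v)\<in>E. G $$ (\<phi> u, \<phi> v)) else 0)"

text \<open>Support of h_H(x;G): exponent vectors in N_0^n (functions vanishing outside [n]).\<close>
definition hsupport :: "nat \<Rightarrow> (nat \<times> nat) set \<Rightarrow> nat \<Rightarrow> real mat \<Rightarrow> (nat \<Rightarrow> nat) set" where
  "hsupport t E n G = {a. (\<forall>i\<ge>n. a i = 0) \<and> hcoeff t E n G a \<noteq> 0}"

definition M_convex :: "(nat \<Rightarrow> nat) set \<Rightarrow> bool" where
  "M_convex S \<longleftrightarrow> (\<forall>a\<in>S. \<forall>b\<in>S. \<forall>i. a i > b i \<longrightarrow>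
     (\<exists>j. a j < b j \<and> a(i := a i - 1, j := a j + 1) \<in> S))"

end

theory Submission
  imports Defs "HOL-Computational_Algebra.Fundamental_Theorem_Algebra" "Jordan_Normal_Form.Schur_Decomposition"
begin

lemma sym_real_root:
  fixes A :: "real mat"
  assumes A: "A \<in> carrier_mat n n" and sym: "transpose_mat A = A" and n: "n > 0"
  shows "\<exists>e. poly (char_poly A) e = 0"
proof -
  let ?Ac = "map_mat complex_of_real A"
  have Ac: "?Ac \<in> carrier_mat n n" using A by auto
  have cp: "char_poly ?Ac = map_poly of_real (char_poly A)"
    using of_real_hom.char_poly_hom[OF A] by simp
  have "degree (char_poly ?Ac) = n" using degree_monic_char_poly[OF Ac] by simp
  hence "\<not> constant (poly (char_poly ?Ac))" using n by (simp add: constant_degree)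
  then obtain z where z: "poly (char_poly ?Ac) z = 0" using fundamental_theorem_of_algebra by blast
  hence "eigenvalue ?Ac z" using eigenvalue_root_char_poly[OF Ac] by simp
  then obtain v where ev: "eigenvector ?Ac v z" unfolding eigenvalue_def by blast
  hence v: "v \<in> carrier_vec n" and v0: "v \<noteq> 0\<^sub>v n" and Av: "?Ac *\<^sub>v v = z \<cdot>\<^sub>v v"
    unfolding eigenvector_def using Ac by auto
  have symA: "\<And>i j. i < n \<Longrightarrow> j < n \<Longrightarrow> A $$ (j, i) = A $$ (i, j)"
    using sym A by (metis carrier_matD index_transpose_mat(1))
  define S where "S = (\<Sum>i<n. cnj (v $ i) * (\<Sum>j<n. of_real (A $$ (i,j)) * v $ j))"
  have row: "\<And>i. i < n \<Longrightarrow> (?Ac *\<^sub>v v) $ i = (\<Sum>j<n. of_real (A $$ (i,j)) * v $ j)"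
    using A v by (auto simp: scalar_prod_def row_def lessThan_atLeast0 intro!: sum.cong)
  have S1: "S = z * (\<Sum>i<n. cnj (v $ i) * v $ i)"
  proof -
    have "S = (\<Sum>i<n. cnj (v $ i) * (z * v $ i))"
      unfolding S_def using row Av v by (auto intro!: sum.cong simp flip: row)
    thus ?thesis by (simp add: sum_distrib_left algebra_simps)
  qed
  have "cnj S = (\<Sum>i<n. v $ i * (\<Sum>j<n. of_real (A $$ (i,j)) * cnj (v $ j)))"
    unfolding S_def by simp
  also have "\<dots> = (\<Sum>i<n. \<Sum>j<n. cnj (v $ j) * of_real (A $$ (j,i)) * v $ i)"
    by (auto simp: sum_distrib_left symA algebra_simps intro!: sum.cong)
  also have "\<dots> = (\<Sum>j<n. \<Sum>i<n. cnj (v $ j) * of_real (A $$ (j,i)) * v $ i)"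
    by (rule sum.swap)
  also have "\<dots> = S" unfolding S_def by (simp add: sum_distrib_left algebra_simps)
  finally have Sr: "Im S = 0" by (metis cnj.simps(2) neg_equal_zero)
  define N where "N = (\<Sum>i<n. cnj (v $ i) * v $ i)"
  define r where "r = (\<Sum>i<n. (cmod (v $ i))^2)"
  have Nre: "N = of_real r" unfolding r_def
    unfolding N_def by (simp add: mult.commute complex_norm_square[symmetric] of_real_sum)
  have "\<exists>i<n. v $ i \<noteq> 0" using v v0 by (metis carrier_vecD eq_vecI index_zero_vec)
  then obtain i0 where i0: "i0 < n" "v $ i0 \<noteq> 0" by blast
  have "r > 0" unfolding r_def
    by (rule sum_pos2[of _ i0]) (use i0 in auto)
  hence Nne: "N \<noteq> 0" and NIm: "Im N = 0" and NRe: "Re N > 0" using Nre by auto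
  have "Im z = 0"
  proof -
    have "Im S = Im z * Re N + Re z * Im N" using S1 N_def by simp
    thus ?thesis using Sr NIm NRe by simp
  qed
  hence "z = of_real (Re z)" by (simp add: complex_eq_iff)
  hence "poly (map_poly of_real (char_poly A)) (of_real (Re z) :: complex) = 0" using z cp by simp
  hence "poly (char_poly A) (Re z) = 0" by simp
  thus ?thesis by blast
qed

lemma conj_real_vec[simp]: "conjugate (w::real vec) = w"
  by (rule eq_vecI) auto

lemma real_sprod_self_ge0: "(w::real vec) \<bullet> w \<ge> 0"
  unfolding scalar_prod_def by (auto intro: sum_nonneg)

lemma char_poly_dim0: assumes "(A::'a::field mat) \<in> carrier_mat 0 0" shows "char_poly A = 1"
proof -
  have "monic (char_poly A)" "degree (char_poly A) = 0" using degree_monic_char_poly[OF assms] by auto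
  thus ?thesis using monic_degree_0[of "char_poly A"] by simp
qed

lemma spectral:
  fixes A :: "real mat"
  assumes "A \<in> carrier_mat n n" "transpose_mat A = A"
  shows "\<exists>ds qs. length ds = n \<and> length qs = n \<and> set qs \<subseteq> carrier_vec n \<and>
     char_poly A = (\<Prod>d\<leftarrow>ds. [:-d,1:]) \<and>
     (\<forall>x\<in>carrier_vec n. x \<bullet> (A *\<^sub>v x) = (\<Sum>k<n. ds!k * (qs!k \<bullet> x)^2))"
  using assms
proof (induction n arbitrary: A)
  case 0
  show ?case
    by (rule exI[of _ "[]"], rule exI[of _ "[]"])
       (use 0 in \<open>auto simp: char_poly_dim0 scalar_prod_def\<close>)
next
  case (Suc m A)
  define n where "n = Suc m"
  have A: "A \<in> carrier_mat n n" and symA: "transpose_mat A = A" using Suc n_def by auto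
  obtain e where "poly (char_poly A) e = 0" using sym_real_root[OF A symA] n_def by auto
  hence "eigenvalue A e" using eigenvalue_root_char_poly[OF A] by simp
  from find_eigenvector[OF A this]
  have v: "find_eigenvector A e \<in> carrier_vec n" and v0: "find_eigenvector A e \<noteq> 0\<^sub>v n"
    and Av: "A *\<^sub>v find_eigenvector A e = e \<cdot>\<^sub>v find_eigenvector A e"
    unfolding eigenvector_def using A by auto
  define v where "v = find_eigenvector A e"
  note v = v[folded v_def] and v0 = v0[folded v_def] and Av = Av[folded v_def]
  interpret cof_vec_space n "TYPE(real)" .
  define b where "b = basis_completion v"
  from basis_completion[OF v v0, folded b_def]
  have dist_b: "distinct b" and indep: "\<not> lin_dep (set b)" and b: "set b \<subseteq> carrier_vec n"
    and hdb: "hd b = v" and len_b: "length b = n" by auto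
  from hdb len_b n_def obtain vs where bv: "b = v # vs" by (cases b, auto)
  define ws where "ws = gram_schmidt n b"
  from gram_schmidt_result[OF b dist_b indep ws_def]
  have ws: "set ws \<subseteq> carrier_vec n" "corthogonal ws" "length ws = n"
    by (auto simp: len_b)
  from gram_schmidt_hd[OF v, of vs, folded bv] have hdws: "hd ws = v" unfolding ws_def .
  have ws0: "ws ! 0 = v" using hdws ws(3) n_def by (cases ws, auto)
  have wsc: "\<And>i. i < n \<Longrightarrow> ws ! i \<in> carrier_vec n" using ws by auto
  have orth: "\<And>i j. i < n \<Longrightarrow> j < n \<Longrightarrow> (ws ! i \<bullet> ws ! j = 0) = (i \<noteq> j)"
    using ws(2,3) unfolding corthogonal_def by auto
  have wpos: "\<And>i. i < n \<Longrightarrow> ws ! i \<bullet> ws ! i > 0"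
    using orth real_sprod_self_ge0 by (metis less_eq_real_def)
  define nf where "nf = (\<lambda>w::real vec. (1 / sqrt (w \<bullet> w)) \<cdot>\<^sub>v w)"
  define us where "us = map nf ws"
  have us_len: "length us = n" using ws us_def by auto
  have usc: "\<And>i. i < n \<Longrightarrow> us ! i \<in> carrier_vec n" using wsc ws(3) unfolding us_def nf_def by auto
  have us_on: "\<And>i j. i < n \<Longrightarrow> j < n \<Longrightarrow> us ! i \<bullet> us ! j = (if i = j then 1 else 0)"
  proof -
    fix i j assume i: "i < n" and j: "j < n"
    have "us ! i \<bullet> us ! j = (1 / sqrt (ws!i \<bullet> ws!i)) * (1 / sqrt (ws!j \<bullet> ws!j)) * (ws ! i \<bullet> ws ! j)"
      unfolding us_def nf_def using i j ws(3) wsc[OF i] wsc[OF j] by simp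
    thus "us ! i \<bullet> us ! j = (if i = j then 1 else 0)"
      using orth[OF i j] wpos[OF i] wpos[OF j]
      by (auto simp: real_sqrt_mult[symmetric] field_simps)
  qed
  define u0 where "u0 = us ! 0"
  have u0: "u0 = (1 / sqrt (v \<bullet> v)) \<cdot>\<^sub>v v" unfolding u0_def us_def nf_def using ws0 ws(3) n_def by auto
  have u0c: "u0 \<in> carrier_vec n" using usc n_def u0_def by auto
  have Au0: "A *\<^sub>v u0 = e \<cdot>\<^sub>v u0" unfolding u0 using mult_mat_vec[OF A v] Av
    by (auto simp: smult_smult_assoc mult.commute)
  define W where "W = mat_of_cols n us"
  have W: "W \<in> carrier_mat n n" unfolding W_def using us_len by (metis mat_of_cols_carrier(1))
  have colW: "\<And>j. j < n \<Longrightarrow> col W j = us ! j" unfolding W_def using us_len usc by auto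
  have WTW: "transpose_mat W * W = 1\<^sub>m n"
    by (rule eq_matI) (use W colW us_on in auto)
  have WWT: "W * transpose_mat W = 1\<^sub>m n"
    using mat_mult_left_right_inverse[OF _ W WTW] W by auto
  define A' where "A' = transpose_mat W * A * W"
  have A': "A' \<in> carrier_mat n n" unfolding A'_def using W A by auto
  have A'ij: "\<And>i j. i < n \<Longrightarrow> j < n \<Longrightarrow> A' $$ (i,j) = us ! i \<bullet> (A *\<^sub>v us ! j)"
  proof -
    fix i j assume i: "i < n" and j: "j < n"
    have "A' = transpose_mat W * (A * W)" unfolding A'_def using W A by auto
    hence "A' $$ (i,j) = row (transpose_mat W) i \<bullet> col (A * W) j" using W A i j by simp
    also have "col (A * W) j = A *\<^sub>v col W j" by (rule col_mult2[OF A W j])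
    also have "col W j = us ! j" using colW j by simp
    also have "row (transpose_mat W) i = col W i" using W i by simp
    also have "col W i = us ! i" using colW i by simp
    finally show "A' $$ (i,j) = us ! i \<bullet> (A *\<^sub>v us ! j)" .
  qed
  have A'sym: "\<And>i j. i < n \<Longrightarrow> j < n \<Longrightarrow> A' $$ (j,i) = A' $$ (i,j)"
  proof -
    fix i j assume i: "i < n" and j: "j < n"
    have "us ! i \<bullet> (A *\<^sub>v us ! j) = (transpose_mat A *\<^sub>v us ! i) \<bullet> us ! j"
      using transpose_vec_mult_scalar[OF A usc[OF j] usc[OF i]] by simp
    also have "\<dots> = us ! j \<bullet> (A *\<^sub>v us ! i)" using symA A usc[OF i] usc[OF j]
      by (metis comm_scalar_prod mult_mat_vec_carrier)
    finally show "A' $$ (j,i) = A' $$ (i,j)" using A'ij i j by simp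
  qed
  have A'col0: "\<And>i. i < n \<Longrightarrow> A' $$ (i,0) = (if i = 0 then e else 0)"
  proof -
    fix i assume i: "i < n"
    have "A' $$ (i,0) = us ! i \<bullet> (e \<cdot>\<^sub>v u0)" using A'ij[OF i] n_def Au0 u0_def by simp
    also have "\<dots> = e * (us ! i \<bullet> u0)" using usc[OF i] u0c by simp
    finally show "A' $$ (i,0) = (if i = 0 then e else 0)" using us_on[OF i, of 0] n_def u0_def by simp
  qed
  obtain A1 A2 A0 A3 where sp: "split_block A' 1 1 = (A1,A2,A0,A3)"
    by (cases "split_block A' 1 1", auto)
  have dims: "dim_row A' = 1 + m" "dim_col A' = 1 + m" using A' n_def by auto
  note spl = split_block[OF sp dims]
  have A3def: "A3 = mat m m (\<lambda>(i,j). A' $$ (i+1, j+1))"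
    using sp dims unfolding split_block_def Let_def by auto
  have A0def: "A0 = 0\<^sub>m m 1"
    using sp dims A'col0 n_def unfolding split_block_def Let_def by (auto intro!: eq_matI)
  have A1def: "A1 = mat 1 1 (\<lambda>_. e)"
    using sp dims A'col0 n_def unfolding split_block_def Let_def by (auto intro!: eq_matI)
  have A3: "A3 \<in> carrier_mat m m" using spl by auto
  have A3sym: "transpose_mat A3 = A3"
    by (rule eq_matI) (auto simp: A3def A'sym n_def)
  from Suc.IH[OF A3 A3sym] obtain ds3 qs3 where
    IH: "length ds3 = m" "length qs3 = m" "set qs3 \<subseteq> carrier_vec m"
        "char_poly A3 = (\<Prod>d\<leftarrow>ds3. [:-d,1:])"
        "\<And>x. x\<in>carrier_vec m \<Longrightarrow> x \<bullet> (A3 *\<^sub>v x) = (\<Sum>k<m. ds3!k * (qs3!k \<bullet> x)^2)" by blast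
  have WAW: "W * A' * transpose_mat W = (W * transpose_mat W) * A * (W * transpose_mat W)"
    unfolding A'_def using W A by (simp add: assoc_mult_mat[of _ n n _ n _ n])
  have sim: "similar_mat A A'"
    unfolding similar_mat_def
    by (rule exI[of _ W], rule exI[of _ "transpose_mat W"], rule similar_mat_witI[of _ _ n])
       (use WWT WTW WAW A A' W in auto)
  have cpA: "char_poly A = [:-e,1:] * char_poly A3"
  proof -
    have "char_poly A = char_poly A'" using char_poly_similar[OF sim] .
    also have "A' = four_block_mat A1 A2 (0\<^sub>m m 1) A3" using spl A0def by simp
    also have "char_poly \<dots> = char_poly A1 * char_poly A3"
      by (rule char_poly_four_block_zeros_col) (use spl in auto)
    also have "char_poly A1 = [:-e,1:]"
      by (simp add: A1def char_poly_defs det_def sign_def)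
    finally show ?thesis .
  qed
  define ext where "ext = (\<lambda>q::real vec. W *\<^sub>v vec n (\<lambda>i. if i = 0 then 0 else q $ (i - 1)))"
  define qs where "qs = u0 # map ext qs3"
  define ds where "ds = e # ds3"
  show ?case
  proof (intro exI[of _ ds] exI[of _ qs] conjI ballI)
    show "length ds = Suc m" "length qs = Suc m" using IH unfolding ds_def qs_def by auto
    show "set qs \<subseteq> carrier_vec (Suc m)" using u0c W unfolding qs_def ext_def n_def by auto
    show "char_poly A = (\<Prod>d\<leftarrow>ds. [:-d,1:])" using cpA IH(4) unfolding ds_def by simp
  next
    fix x :: "real vec" assume "x \<in> carrier_vec (Suc m)"
    hence x: "x \<in> carrier_vec n" using n_def by simp
    define y where "y = transpose_mat W *\<^sub>v x"
    have y: "y \<in> carrier_vec n" using W x unfolding y_def by auto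
    have xWy: "x = W *\<^sub>v y" unfolding y_def using W x WWT
      by (metis assoc_mult_mat_vec one_mult_mat_vec transpose_carrier_mat)
    have "x \<bullet> (A *\<^sub>v x) = (W *\<^sub>v y) \<bullet> ((A * W) *\<^sub>v y)" using xWy A W y by simp
    also have "\<dots> = y \<bullet> (transpose_mat W *\<^sub>v ((A * W) *\<^sub>v y))"
      using transpose_vec_mult_scalar[of "transpose_mat W" n n "(A * W) *\<^sub>v y" y] W A y
      by simp
    also have "\<dots> = y \<bullet> (A' *\<^sub>v y)"
    proof -
      have WT: "transpose_mat W \<in> carrier_mat n n" and AW: "A * W \<in> carrier_mat n n" using W A by auto
      have "A' *\<^sub>v y = transpose_mat W *\<^sub>v ((A * W) *\<^sub>v y)"
        unfolding A'_def using assoc_mult_mat_vec[OF WT AW y] assoc_mult_mat[OF WT A W] by simp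
      thus ?thesis by simp
    qed
    finally have q1: "x \<bullet> (A *\<^sub>v x) = y \<bullet> (A' *\<^sub>v y)" .
    define y3 where "y3 = vec m (\<lambda>i. y $ Suc i)"
    have y3: "y3 \<in> carrier_vec m" unfolding y3_def by simp
    have "y \<bullet> (A' *\<^sub>v y) = (\<Sum>i<n. y $ i * (\<Sum>j<n. A' $$ (i,j) * y $ j))"
      using A' y by (simp add: scalar_prod_def row_def lessThan_atLeast0 mult.commute)
    also have "\<dots> = y $ 0 * (\<Sum>j<n. A' $$ (0,j) * y $ j) + (\<Sum>i<m. y $ Suc i * (\<Sum>j<n. A' $$ (Suc i,j) * y $ j))"
      unfolding n_def by (rule sum.lessThan_Suc_shift)
    also have "(\<Sum>j<n. A' $$ (0,j) * y $ j) = A' $$ (0,0) * y $ 0 + (\<Sum>j<m. A' $$ (0,Suc j) * y $ Suc j)"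
      unfolding n_def by (rule sum.lessThan_Suc_shift)
    also have "(\<Sum>j<m. A' $$ (0,Suc j) * y $ Suc j) = 0"
    proof (rule sum.neutral, rule ballI)
      fix j assume "j \<in> {..<m}"
      hence "A' $$ (0, Suc j) = A' $$ (Suc j, 0)" "A' $$ (Suc j, 0) = 0" using A'col0 A'sym[of "Suc j" 0] n_def by auto
      thus "A' $$ (0, Suc j) * y $ Suc j = 0" by simp
    qed
    also have "(\<Sum>i<m. y $ Suc i * (\<Sum>j<n. A' $$ (Suc i,j) * y $ j)) =
               (\<Sum>i<m. y $ Suc i * (\<Sum>j<m. A' $$ (Suc i, Suc j) * y $ Suc j))"
    proof (rule sum.cong[OF refl])
      fix i assume "i \<in> {..<m}"
      hence "A' $$ (Suc i, 0) = 0" using A'col0 n_def by auto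
      thus "y $ Suc i * (\<Sum>j<n. A' $$ (Suc i,j) * y $ j) = y $ Suc i * (\<Sum>j<m. A' $$ (Suc i, Suc j) * y $ Suc j)"
        unfolding n_def by (simp add: sum.lessThan_Suc_shift del: sum.lessThan_Suc)
    qed
    also have "A' $$ (0,0) = e" using A'col0 n_def by simp
    also have "(\<Sum>i<m. y $ Suc i * (\<Sum>j<m. A' $$ (Suc i, Suc j) * y $ Suc j)) = y3 \<bullet> (A3 *\<^sub>v y3)"
      using A3 by (simp add: y3_def A3def scalar_prod_def row_def lessThan_atLeast0 mult.commute)
    also have "\<dots> = (\<Sum>k<m. ds3!k * (qs3!k \<bullet> y3)^2)" using IH(5)[OF y3] .
    finally have q2: "y \<bullet> (A' *\<^sub>v y) = e * (y $ 0)^2 + (\<Sum>k<m. ds3!k * (qs3!k \<bullet> y3)^2)"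
      by (simp add: power2_eq_square)
    have y0: "y $ 0 = u0 \<bullet> x" unfolding y_def using W x colW n_def u0_def by simp
    have yq: "qs3!k \<bullet> y3 = ext (qs3!k) \<bullet> x" if k: "k < m" for k
    proof -
      have qk: "qs3!k \<in> carrier_vec m" using IH(2,3) k by auto
      define z where "z = vec n (\<lambda>i. if i = 0 then 0 else (qs3!k) $ (i - 1))"
      have z: "z \<in> carrier_vec n" unfolding z_def by simp
      have "ext (qs3!k) \<bullet> x = (W *\<^sub>v z) \<bullet> x" unfolding ext_def z_def ..
      also have "\<dots> = z \<bullet> y" unfolding y_def
        using transpose_vec_mult_scalar[of "transpose_mat W" n n x z] W z x
        by simp
      also have "\<dots> = (\<Sum>i<n. z $ i * y $ i)" using y by (simp add: scalar_prod_def lessThan_atLeast0)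
      also have "\<dots> = (\<Sum>i<m. (qs3!k) $ i * y $ Suc i)"
        unfolding n_def z_def by (simp add: sum.lessThan_Suc_shift del: sum.lessThan_Suc)
      also have "\<dots> = qs3!k \<bullet> y3" using qk by (simp add: y3_def scalar_prod_def lessThan_atLeast0)
      finally show ?thesis by simp
    qed
    have "(\<Sum>k<Suc m. ds!k * (qs!k \<bullet> x)^2) = e * (u0 \<bullet> x)^2 + (\<Sum>k<m. ds3!k * (ext (qs3!k) \<bullet> x)^2)"
      unfolding ds_def qs_def using IH(2) by (simp add: sum.lessThan_Suc_shift del: sum.lessThan_Suc)
    also have "\<dots> = x \<bullet> (A *\<^sub>v x)" using q1 q2 y0 yq by simp
    finally show "x \<bullet> (A *\<^sub>v x) = (\<Sum>k<Suc m. ds!k * (qs!k \<bullet> x)^2)" by simp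
  qed
qed

lemma order_lin: "Polynomial.order (x::real) [:-d,1:] = (if x = d then 1 else (0::nat))"
proof (cases "x = d")
  case True thus ?thesis using order_power_n_n[of d 1] by simp
next
  case False
  hence "poly [:-d,1:] x \<noteq> 0" by simp
  thus ?thesis using False order_root[of "[:-d,1:]" x] by auto
qed

lemma order_prod_lin: "Polynomial.order (x::real) (\<Prod>d\<leftarrow>ds. [:-d,1:]) = count_list ds x"
proof (induction ds)
  case Nil
  have "Polynomial.order x (1::real poly) = 0" by (simp add: order_0I)
  thus ?case by simp
next
  case (Cons d ds)
  have nz: "(\<Prod>d\<leftarrow>ds. [:-d,1:]) \<noteq> (0::real poly)"
    by (auto simp: prod_list_zero_iff)
  have lin: "[:-d,1:] \<noteq> (0::real poly)" by simp
  have "[:-d,1:] * (\<Prod>d\<leftarrow>ds. [:-d,1:]) \<noteq> (0::real poly)" using no_zero_divisors[OF lin nz] .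
  hence "Polynomial.order x ([:-d,1:] * (\<Prod>d\<leftarrow>ds. [:-d,1:])) =
         Polynomial.order x [:-d,1:] + Polynomial.order x (\<Prod>d\<leftarrow>ds. [:-d,1:])"
    by (rule order_mult)
  thus ?case using Cons order_lin[of x d] by auto
qed

lemma sum_count_list: "finite S \<Longrightarrow> (\<Sum>x\<in>S. count_list ds x) = length (filter (\<lambda>d. d \<in> S) ds)"
proof (induction ds)
  case Nil thus ?case by simp
next
  case (Cons d ds)
  have "(\<Sum>x\<in>S. count_list (d # ds) x) = (\<Sum>x\<in>S. (if d = x then 1 else 0) + count_list ds x)"
    by (rule sum.cong) auto
  also have "\<dots> = (\<Sum>x\<in>S. (if d = x then 1 else 0)) + (\<Sum>x\<in>S. count_list ds x)"
    by (rule sum.distrib)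
  also have "(\<Sum>x\<in>S. (if d = x then 1 else (0::nat))) = (if d \<in> S then 1 else 0)"
    using Cons.prems by (simp add: sum.delta)
  finally show ?case using Cons by simp
qed

lemma num_pos_prod:
  assumes "char_poly A = (\<Prod>d\<leftarrow>ds. [:-d,1:])"
  shows "num_pos_eigenvalues A = length (filter (\<lambda>d. d > 0) ds)"
proof -
  have S: "{x. x > 0 \<and> poly (char_poly A) x = 0} = {x. x \<in> set ds \<and> x > 0}"
    unfolding assms poly_prod_list_zero_iff by auto
  have "num_pos_eigenvalues A = (\<Sum>x\<in>{x. x \<in> set ds \<and> x > 0}. count_list ds x)"
    unfolding num_pos_eigenvalues_def S unfolding assms order_prod_lin ..
  also have "\<dots> = length (filter (\<lambda>d. d \<in> {x. x \<in> set ds \<and> x > 0}) ds)"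
    by (rule sum_count_list) auto
  also have "filter (\<lambda>d. d \<in> {x. x \<in> set ds \<and> x > 0}) ds = filter (\<lambda>d. d > 0) ds"
    by (rule filter_cong) auto
  finally show ?thesis .
qed

lemma spec_functional:
  fixes A :: "real mat"
  assumes A: "A \<in> carrier_mat n n" and sym: "transpose_mat A = A"
    and np: "num_pos_eigenvalues A \<le> 1" and n: "n > 0"
  shows "\<exists>q\<in>carrier_vec n. \<forall>z\<in>carrier_vec n. q \<bullet> z = 0 \<longrightarrow> z \<bullet> (A *\<^sub>v z) \<le> 0"
proof -
  obtain ds qs where sp: "length ds = n" "length qs = n" "set qs \<subseteq> carrier_vec n"
     "char_poly A = (\<Prod>d\<leftarrow>ds. [:-d,1:])"
     "\<And>x. x\<in>carrier_vec n \<Longrightarrow> x \<bullet> (A *\<^sub>v x) = (\<Sum>k<n. ds!k * (qs!k \<bullet> x)^2)"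
    using spectral[OF A sym] by blast
  have "card {k. k < n \<and> ds ! k > 0} \<le> 1"
    using np num_pos_prod[OF sp(4)] length_filter_conv_card[of "\<lambda>d. d > 0" ds] sp(1) by simp
  hence "\<exists>k0<n. \<forall>k<n. k \<noteq> k0 \<longrightarrow> ds ! k \<le> 0"
  proof (cases "\<exists>k0<n. ds ! k0 > 0")
    case True
    then obtain k0 where k0: "k0 < n" "ds ! k0 > 0" by blast
    have "\<forall>k<n. k \<noteq> k0 \<longrightarrow> ds ! k \<le> 0"
    proof (intro allI impI, rule ccontr)
      fix k assume k: "k < n" "k \<noteq> k0" "\<not> ds ! k \<le> 0"
      have "{k, k0} \<subseteq> {k. k < n \<and> ds ! k > 0}" using k k0 by auto
      hence "card {k, k0} \<le> card {k. k < n \<and> ds ! k > 0}" by (rule card_mono[rotated]) auto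
      thus False using \<open>card {k. k < n \<and> ds ! k > 0} \<le> 1\<close> k by simp
    qed
    thus ?thesis using k0 by blast
  next
    case False thus ?thesis using n by (metis not_le)
  qed
  then obtain k0 where k0: "k0 < n" "\<And>k. k < n \<Longrightarrow> k \<noteq> k0 \<Longrightarrow> ds ! k \<le> 0" by blast
  show ?thesis
  proof (intro bexI[of _ "qs ! k0"] ballI impI)
    show "qs ! k0 \<in> carrier_vec n" using sp k0 by auto
    fix z :: "real vec" assume z: "z \<in> carrier_vec n" and qz: "qs ! k0 \<bullet> z = 0"
    have "z \<bullet> (A *\<^sub>v z) = (\<Sum>k<n. ds!k * (qs!k \<bullet> z)^2)" using sp(5)[OF z] .
    also have "\<dots> \<le> 0"
    proof (rule sum_nonpos)
      fix k assume "k \<in> {..<n}"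
      thus "ds!k * (qs!k \<bullet> z)^2 \<le> 0" using k0 qz
        by (cases "k = k0") (auto intro: mult_nonpos_nonneg)
    qed
    finally show "z \<bullet> (A *\<^sub>v z) \<le> 0" .
  qed
qed

lemma bf_sym:
  fixes A :: "real mat"
  assumes A: "A \<in> carrier_mat n n" and sym: "transpose_mat A = A"
    and x: "x \<in> carrier_vec n" and y: "y \<in> carrier_vec n"
  shows "y \<bullet> (A *\<^sub>v x) = x \<bullet> (A *\<^sub>v y)"
proof -
  have "x \<bullet> (A *\<^sub>v y) = (transpose_mat A *\<^sub>v x) \<bullet> y"
    using transpose_vec_mult_scalar[OF A y x] by simp
  also have "\<dots> = y \<bullet> (A *\<^sub>v x)" using sym A x y by (metis comm_scalar_prod mult_mat_vec_carrier)
  finally show ?thesis by simp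
qed

lemma bf_comb:
  fixes A :: "real mat"
  assumes A: "A \<in> carrier_mat n n" and sym: "transpose_mat A = A"
    and x: "x \<in> carrier_vec n" and y: "y \<in> carrier_vec n"
  shows "(a \<cdot>\<^sub>v x + b \<cdot>\<^sub>v y) \<bullet> (A *\<^sub>v (a \<cdot>\<^sub>v x + b \<cdot>\<^sub>v y)) =
     a^2 * (x \<bullet> (A *\<^sub>v x)) + 2 * a * b * (x \<bullet> (A *\<^sub>v y)) + b^2 * (y \<bullet> (A *\<^sub>v y))"
proof -
  have ax: "a \<cdot>\<^sub>v x \<in> carrier_vec n" and "b \<cdot>\<^sub>v y \<in> carrier_vec n" using x y by auto
  have Av: "A *\<^sub>v (a \<cdot>\<^sub>v x + b \<cdot>\<^sub>v y) = a \<cdot>\<^sub>v (A *\<^sub>v x) + b \<cdot>\<^sub>v (A *\<^sub>v y)"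
    using mult_add_distrib_mat_vec[OF A ax \<open>b \<cdot>\<^sub>v y \<in> carrier_vec n\<close>] mult_mat_vec[OF A x] mult_mat_vec[OF A y] by simp
  have Ax: "A *\<^sub>v x \<in> carrier_vec n" and Ay: "A *\<^sub>v y \<in> carrier_vec n" using A x y by auto
  have "(a \<cdot>\<^sub>v x + b \<cdot>\<^sub>v y) \<bullet> (a \<cdot>\<^sub>v (A *\<^sub>v x) + b \<cdot>\<^sub>v (A *\<^sub>v y)) =
     a * a * (x \<bullet> (A *\<^sub>v x)) + a * b * (x \<bullet> (A *\<^sub>v y)) + b * a * (y \<bullet> (A *\<^sub>v x)) + b * b * (y \<bullet> (A *\<^sub>v y))"
    using x y Ax Ay
    by (simp add: add_scalar_prod_distrib[of _ n] scalar_prod_add_distrib[of _ n] algebra_simps)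
  thus ?thesis unfolding Av using bf_sym[OF A sym x y] by (simp add: power2_eq_square algebra_simps)
qed

lemma rev_cs:
  fixes A :: "real mat"
  assumes A: "A \<in> carrier_mat n n" and sym: "transpose_mat A = A"
    and np: "num_pos_eigenvalues A \<le> 1"
    and x: "x \<in> carrier_vec n" and y: "y \<in> carrier_vec n"
    and pos: "x \<bullet> (A *\<^sub>v x) > 0"
  shows "(x \<bullet> (A *\<^sub>v x)) * (y \<bullet> (A *\<^sub>v y)) \<le> (x \<bullet> (A *\<^sub>v y))^2"
proof (rule ccontr)
  assume neg: "\<not> ?thesis"
  have n: "n > 0"
  proof (rule ccontr)
    assume "\<not> n > 0" hence "n = 0" by simp
    hence "x \<bullet> (A *\<^sub>v x) = 0" using x A by (simp add: scalar_prod_def)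
    thus False using pos by simp
  qed
  obtain q where q: "q \<in> carrier_vec n" and qz: "\<And>z. z \<in> carrier_vec n \<Longrightarrow> q \<bullet> z = 0 \<Longrightarrow> z \<bullet> (A *\<^sub>v z) \<le> 0"
    using spec_functional[OF A sym np n] by blast
  define a where "a = x \<bullet> (A *\<^sub>v x)"
  define b where "b = x \<bullet> (A *\<^sub>v y)"
  define c where "c = y \<bullet> (A *\<^sub>v y)"
  define fx where "fx = q \<bullet> x"
  define fy where "fy = q \<bullet> y"
  have fx: "fx \<noteq> 0" using qz[OF x] pos unfolding fx_def by force
  define z where "z = fy \<cdot>\<^sub>v x + (- fx) \<cdot>\<^sub>v y"
  have zc: "z \<in> carrier_vec n" using x y unfolding z_def by auto
  have "q \<bullet> z = fy * fx + (- fx) * fy"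
    unfolding z_def fx_def fy_def using q x y by (simp add: scalar_prod_add_distrib[of _ n])
  hence "q \<bullet> z = 0" by simp
  hence le: "z \<bullet> (A *\<^sub>v z) \<le> 0" using qz zc by blast
  have eq: "z \<bullet> (A *\<^sub>v z) = fy^2 * a + 2 * fy * (- fx) * b + (- fx)^2 * c"
    unfolding z_def a_def b_def c_def using bf_comb[OF A sym x y] by simp
  have apos: "a > 0" using pos a_def by simp
  have "a * c > b^2" using neg a_def b_def c_def by simp
  have "a * (z \<bullet> (A *\<^sub>v z)) = (a * fy - b * fx)^2 + (a * c - b^2) * fx^2"
    unfolding eq by (simp add: power2_eq_square algebra_simps)
  moreover have "(a * c - b^2) * fx^2 > 0" using \<open>a * c > b^2\<close> fx by simp
  moreover have "(a * fy - b * fx)^2 \<ge> 0" by simp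
  ultimately have "a * (z \<bullet> (A *\<^sub>v z)) > 0" by linarith
  thus False using le apos by (simp add: mult_pos_neg zero_less_mult_iff)
qed

lemma bf_unit:
  fixes G :: "real mat"
  assumes G: "G \<in> carrier_mat n n" and a: "a < n" and b: "b < n"
  shows "unit_vec n a \<bullet> (G *\<^sub>v unit_vec n b) = G $$ (a,b)"
proof -
  have "(G *\<^sub>v unit_vec n b) $ a = row G a \<bullet> unit_vec n b" using G a by simp
  also have "\<dots> = G $$ (a,b)" using G a b by simp
  finally show ?thesis using G a by simp
qed

lemma bf_addL:
  fixes G :: "real mat"
  assumes G: "G \<in> carrier_mat n n" "x \<in> carrier_vec n" "y \<in> carrier_vec n" "z \<in> carrier_vec n"
  shows "(x + y) \<bullet> (G *\<^sub>v z) = x \<bullet> (G *\<^sub>v z) + y \<bullet> (G *\<^sub>v z)"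
  using assms by (simp add: add_scalar_prod_distrib[of _ n])

lemma bf_addR:
  fixes G :: "real mat"
  assumes G: "G \<in> carrier_mat n n" "x \<in> carrier_vec n" "y \<in> carrier_vec n" "z \<in> carrier_vec n"
  shows "x \<bullet> (G *\<^sub>v (y + z)) = x \<bullet> (G *\<^sub>v y) + x \<bullet> (G *\<^sub>v z)"
  using assms by (simp add: mult_add_distrib_mat_vec[of _ n n] scalar_prod_add_distrib[of _ n])

lemma bf_smultR:
  fixes G :: "real mat"
  assumes G: "G \<in> carrier_mat n n" "x \<in> carrier_vec n" "y \<in> carrier_vec n"
  shows "x \<bullet> (G *\<^sub>v (s \<cdot>\<^sub>v y)) = s * (x \<bullet> (G *\<^sub>v y))"
  using assms by (simp add: mult_mat_vec[of _ n n])

lemma sv_left: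
  fixes w :: "real vec"
  assumes "w \<in> carrier_vec n" "a < n" "b < n"
  shows "(unit_vec n a + t \<cdot>\<^sub>v unit_vec n b) \<bullet> w = w $ a + t * w $ b"
proof -
  have "(unit_vec n a + t \<cdot>\<^sub>v unit_vec n b) \<bullet> w = unit_vec n a \<bullet> w + (t \<cdot>\<^sub>v unit_vec n b) \<bullet> w"
    using assms by (intro add_scalar_prod_distrib[of _ n]) auto
  also have "\<dots> = w $ a + t * w $ b" using assms by simp
  finally show ?thesis .
qed

lemma mv_idx:
  fixes G :: "real mat"
  assumes G: "G \<in> carrier_mat n n" and r: "r < n" and c: "c < n" and d: "d < n"
  shows "(G *\<^sub>v (unit_vec n c + s \<cdot>\<^sub>v unit_vec n d)) $ r = G $$ (r,c) + s * G $$ (r,d)"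
proof -
  have "(G *\<^sub>v (unit_vec n c + s \<cdot>\<^sub>v unit_vec n d)) $ r = row G r \<bullet> (unit_vec n c + s \<cdot>\<^sub>v unit_vec n d)"
    using G r by simp
  also have "\<dots> = row G r \<bullet> unit_vec n c + row G r \<bullet> (s \<cdot>\<^sub>v unit_vec n d)"
    using G r by (intro scalar_prod_add_distrib[of _ n]) auto
  also have "\<dots> = G $$ (r,c) + s * G $$ (r,d)" using G r c d by simp
  finally show ?thesis .
qed

lemma bf_pair:
  fixes G :: "real mat"
  assumes G: "G \<in> carrier_mat n n" and "a < n" "b < n" "c < n" "d < n"
  shows "(unit_vec n a + t \<cdot>\<^sub>v unit_vec n b) \<bullet> (G *\<^sub>v (unit_vec n c + s \<cdot>\<^sub>v unit_vec n d)) =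
     G $$ (a,c) + s * G $$ (a,d) + t * (G $$ (b,c) + s * G $$ (b,d))"
proof -
  have "G *\<^sub>v (unit_vec n c + s \<cdot>\<^sub>v unit_vec n d) \<in> carrier_vec n" using G by simp
  from sv_left[OF this assms(2,3)] show ?thesis using mv_idx[OF G] assms by simp
qed

lemma af_trans:
  fixes G :: "real mat"
  assumes af: "antiferromagnetic n G"
    and i: "i < n" and j: "j < n" and k: "k < n" and l: "l < n"
    and jl: "G $$ (j,l) > 0" and ij: "G $$ (i,j) = 0" and jk: "G $$ (j,k) = 0"
  shows "G $$ (i,k) = 0"
proof (rule ccontr)
  assume ik0: "G $$ (i,k) \<noteq> 0"
  have G: "G \<in> carrier_mat n n" and sym: "transpose_mat G = G"
    and nn: "\<And>a b. a < n \<Longrightarrow> b < n \<Longrightarrow> G $$ (a,b) \<ge> 0"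
    and np: "num_pos_eigenvalues G \<le> 1"
    using af unfolding antiferromagnetic_def weighted_graph_def by auto
  have symG: "\<And>a b. a < n \<Longrightarrow> b < n \<Longrightarrow> G $$ (b,a) = G $$ (a,b)"
    using sym G by (metis carrier_matD index_transpose_mat(1))
  have ik: "G $$ (i,k) > 0" using ik0 nn[OF i k] by simp
  define g where "g = G $$ (j,l)"
  define h where "h = G $$ (i,l) + G $$ (k,l)"
  define x :: "real vec" where "x = unit_vec n i + 1 \<cdot>\<^sub>v unit_vec n k"
  have xc: "x \<in> carrier_vec n" unfolding x_def by simp
  define a where "a = x \<bullet> (G *\<^sub>v x)"
  have a_eq: "a = G $$ (i,i) + G $$ (i,k) + G $$ (k,i) + G $$ (k,k)"
    unfolding a_def x_def using bf_pair[OF G i k i k, of 1 1] by simp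
  have apos: "a > 0" using a_eq ik nn[OF i i] nn[OF k k] nn[OF k i] by linarith
  define s where "s = a * g / (h^2 + 1)"
  have gpos: "g > 0" using jl g_def by simp
  have "h^2 \<ge> 0" by simp
  hence hp: "h^2 + 1 > 0" by linarith
  have spos: "s > 0" unfolding s_def using apos gpos hp by simp
  define y :: "real vec" where "y = unit_vec n j + s \<cdot>\<^sub>v unit_vec n l"
  have yc: "y \<in> carrier_vec n" unfolding y_def by simp
  have b_eq: "x \<bullet> (G *\<^sub>v y) = s * h"
    unfolding x_def y_def h_def using bf_pair[OF G i k j l, of 1 s] ij jk symG[OF j k]
    by (simp add: algebra_simps)
  have c_eq: "y \<bullet> (G *\<^sub>v y) = G $$ (j,j) + s * G $$ (j,l) + s * G $$ (l,j) + s^2 * G $$ (l,l)"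
    unfolding y_def using bf_pair[OF G j l j l, of s s]
    by (simp add: algebra_simps power2_eq_square)
  have c_ge: "y \<bullet> (G *\<^sub>v y) \<ge> 2 * s * g"
  proof -
    have "s^2 * G $$ (l,l) \<ge> 0" using nn[OF l l] by simp
    thus ?thesis unfolding c_eq g_def using nn[OF j j] symG[OF j l] spos by simp
  qed
  have cs: "a * (y \<bullet> (G *\<^sub>v y)) \<le> (s * h)^2"
    using rev_cs[OF G sym np xc yc] apos unfolding a_def b_eq by simp
  have "(s * h)^2 = s * (a * g) * (h^2 / (h^2 + 1))"
    unfolding s_def by (simp add: power2_eq_square field_simps)
  also have "\<dots> \<le> s * (a * g)"
  proof -
    have "h^2 / (h^2 + 1) \<le> 1" using hp by simp
    moreover have "s * (a * g) > 0" using spos apos gpos by simp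
    ultimately show ?thesis using mult_left_le[of "h^2 / (h^2 + 1)" "s * (a * g)"] by simp
  qed
  also have "\<dots> < a * (2 * s * g)" using spos apos gpos by simp
  also have "\<dots> \<le> a * (y \<bullet> (G *\<^sub>v y))" using c_ge apos by simp
  finally show False using cs by simp
qed

definition cnt :: "nat \<Rightarrow> (nat \<Rightarrow> nat) \<Rightarrow> nat \<Rightarrow> nat" where
  "cnt t \<phi> i = card {v\<in>{0..<t}. \<phi> v = i}"

definition homs :: "nat \<Rightarrow> (nat \<times> nat) set \<Rightarrow> nat \<Rightarrow> (nat \<Rightarrow> nat \<Rightarrow> bool) \<Rightarrow> (nat \<Rightarrow> nat) set" where
  "homs t E n P = {\<phi> \<in> {0..<t} \<rightarrow>\<^sub>E {0..<n}. \<forall>(u,v)\<in>E. P (\<phi> u) (\<phi> v)}"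

definition cset :: "nat \<Rightarrow> (nat \<times> nat) set \<Rightarrow> nat \<Rightarrow> (nat \<Rightarrow> nat \<Rightarrow> bool) \<Rightarrow> (nat \<Rightarrow> nat) set" where
  "cset t E n P = cnt t ` homs t E n P"

lemma cnt_out: "\<phi> \<in> {0..<t} \<rightarrow>\<^sub>E {0..<n} \<Longrightarrow> i \<ge> n \<Longrightarrow> cnt t \<phi> i = 0"
  unfolding cnt_def by (auto simp: PiE_def Pi_def)

lemma cnt_pos_iff: "cnt t \<phi> z > 0 \<longleftrightarrow> (\<exists>v<t. \<phi> v = z)"
  unfolding cnt_def by (auto simp: card_gt_0_iff)

lemma hsupport_eq:
  assumes E: "E \<subseteq> {0..<t} \<times> {0..<t}"
    and nn: "\<forall>i<n. \<forall>j<n. G $$ (i,j) \<ge> 0"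
  shows "hsupport t E n G = cset t E n (\<lambda>i j. G $$ (i,j) > 0)"
proof -
  have finE: "finite E" using E finite_subset by blast
  have key: "hcoeff t E n G a \<noteq> 0 \<longleftrightarrow>
      (\<exists>\<phi>\<in>{0..<t} \<rightarrow>\<^sub>E {0..<n}. (\<forall>i<n. cnt t \<phi> i = a i) \<and> (\<forall>(u,v)\<in>E. G $$ (\<phi> u, \<phi> v) > 0))" for a
  proof -
    define f where "f = (\<lambda>\<phi>. if (\<forall>i<n. card {v\<in>{0..<t}. \<phi> v = i} = a i)
        then (\<Prod>(u, v)\<in>E. G $$ (\<phi> u, \<phi> v)) else 0)"
    have ent: "\<And>\<phi> u v. \<phi> \<in> {0..<t} \<rightarrow>\<^sub>E {0..<n} \<Longrightarrow> (u,v) \<in> E \<Longrightarrow> G $$ (\<phi> u, \<phi> v) \<ge> 0"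
      using nn E by (auto simp: PiE_def Pi_def)
    have fnn: "\<And>\<phi>. \<phi> \<in> {0..<t} \<rightarrow>\<^sub>E {0..<n} \<Longrightarrow> f \<phi> \<ge> 0"
      unfolding f_def using ent by (auto intro!: prod_nonneg)
    have fin: "finite ({0..<t} \<rightarrow>\<^sub>E {0..<n})" by (simp add: finite_PiE)
    have "hcoeff t E n G a = sum f ({0..<t} \<rightarrow>\<^sub>E {0..<n})" unfolding hcoeff_def f_def ..
    hence "hcoeff t E n G a \<noteq> 0 \<longleftrightarrow> (\<exists>\<phi>\<in>{0..<t} \<rightarrow>\<^sub>E {0..<n}. f \<phi> \<noteq> 0)"
      using sum_nonneg_eq_0_iff[OF fin fnn] by auto
    also have "\<dots> \<longleftrightarrow> (\<exists>\<phi>\<in>{0..<t} \<rightarrow>\<^sub>E {0..<n}. (\<forall>i<n. cnt t \<phi> i = a i) \<and> (\<forall>(u,v)\<in>E. G $$ (\<phi> u, \<phi> v) > 0))"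
    proof (intro bex_cong refl)
      fix \<phi> assume \<phi>: "\<phi> \<in> {0..<t} \<rightarrow>\<^sub>E {0..<n}"
      have "(\<Prod>(u, v)\<in>E. G $$ (\<phi> u, \<phi> v)) \<noteq> 0 \<longleftrightarrow> (\<forall>(u,v)\<in>E. G $$ (\<phi> u, \<phi> v) \<noteq> 0)"
        using finE by (auto simp: prod_zero_iff)
      also have "\<dots> \<longleftrightarrow> (\<forall>(u,v)\<in>E. G $$ (\<phi> u, \<phi> v) > 0)"
        using ent[OF \<phi>] by (auto simp: less_le)
      finally show "f \<phi> \<noteq> 0 \<longleftrightarrow> (\<forall>i<n. cnt t \<phi> i = a i) \<and> (\<forall>(u,v)\<in>E. G $$ (\<phi> u, \<phi> v) > 0)"
        unfolding f_def cnt_def by auto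
    qed
    finally show ?thesis .
  qed
  show ?thesis
  proof (rule Set.set_eqI, rule iffI)
    fix a assume "a \<in> hsupport t E n G"
    hence a0: "\<forall>i\<ge>n. a i = 0" and "hcoeff t E n G a \<noteq> 0" unfolding hsupport_def by auto
    then obtain \<phi> where \<phi>: "\<phi> \<in> {0..<t} \<rightarrow>\<^sub>E {0..<n}" "\<forall>i<n. cnt t \<phi> i = a i"
        "\<forall>(u,v)\<in>E. G $$ (\<phi> u, \<phi> v) > 0" using key by blast
    have "a = cnt t \<phi>"
    proof
      fix i show "a i = cnt t \<phi> i" using \<phi> a0 cnt_out[OF \<phi>(1)] by (cases "i < n") auto
    qed
    thus "a \<in> cset t E n (\<lambda>i j. G $$ (i,j) > 0)" unfolding cset_def homs_def using \<phi> by auto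
  next
    fix a assume "a \<in> cset t E n (\<lambda>i j. G $$ (i,j) > 0)"
    then obtain \<phi> where \<phi>: "\<phi> \<in> {0..<t} \<rightarrow>\<^sub>E {0..<n}" "\<forall>(u,v)\<in>E. G $$ (\<phi> u, \<phi> v) > 0"
      and a: "a = cnt t \<phi>" unfolding cset_def homs_def by auto
    have "hcoeff t E n G a \<noteq> 0" using key \<phi> a by auto
    moreover have "\<forall>i\<ge>n. a i = 0" using a cnt_out[OF \<phi>(1)] by auto
    ultimately show "a \<in> hsupport t E n G" unfolding hsupport_def by auto
  qed
qed

lemma complete_graph_nn: "\<forall>i<q. \<forall>j<q. complete_graph q $$ (i,j) \<ge> 0"
  by (simp add: complete_graph_def)

lemma cset_cong:
  assumes "\<And>i j. i < n \<Longrightarrow> j < n \<Longrightarrow> P i j = Q i j" and E: "E \<subseteq> {0..<t} \<times> {0..<t}"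
  shows "cset t E n P = cset t E n Q"
proof -
  have "homs t E n P = homs t E n Q"
  proof -
    have "(\<forall>(u,v)\<in>E. P (\<phi> u) (\<phi> v)) = (\<forall>(u,v)\<in>E. Q (\<phi> u) (\<phi> v))"
      if \<phi>: "\<phi> \<in> {0..<t} \<rightarrow>\<^sub>E {0..<n}" for \<phi>
    proof -
      have "\<And>u v. (u,v) \<in> E \<Longrightarrow> P (\<phi> u) (\<phi> v) = Q (\<phi> u) (\<phi> v)"
      proof -
        fix u v assume "(u,v) \<in> E"
        hence "u < t" "v < t" using E by auto
        hence "\<phi> u < n" "\<phi> v < n" using \<phi> by (auto simp: PiE_def Pi_def)
        thus "P (\<phi> u) (\<phi> v) = Q (\<phi> u) (\<phi> v)" using assms(1) by simp
      qed
      thus ?thesis by auto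
    qed
    thus ?thesis unfolding homs_def by auto
  qed
  thus ?thesis unfolding cset_def by simp
qed

lemma hsupport_K:
  assumes E: "E \<subseteq> {0..<t} \<times> {0..<t}"
  shows "hsupport t E q (complete_graph q) = cset t E q (\<lambda>i j. i \<noteq> j)"
  unfolding hsupport_eq[OF E complete_graph_nn]
  by (rule cset_cong[OF _ E]) (simp add: complete_graph_def)

lemma cnt_upd:
  assumes u: "u < t" and i: "\<phi> u = i" and ji: "j \<noteq> i"
  shows "cnt t (\<phi>(u := j)) = (cnt t \<phi>)(i := cnt t \<phi> i - 1, j := cnt t \<phi> j + 1)"
proof
  fix x
  show "cnt t (\<phi>(u := j)) x = ((cnt t \<phi>)(i := cnt t \<phi> i - 1, j := cnt t \<phi> j + 1)) x"
  proof (cases "x = j")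
    case True
    have "{v\<in>{0..<t}. (\<phi>(u := j)) v = x} = insert u {v\<in>{0..<t}. \<phi> v = x}" using True u by auto
    moreover have "u \<notin> {v\<in>{0..<t}. \<phi> v = x}" using True i ji by auto
    ultimately show ?thesis using True unfolding cnt_def by simp
  next
    case False
    show ?thesis
    proof (cases "x = i")
      case True
      have "{v\<in>{0..<t}. (\<phi>(u := j)) v = x} = {v\<in>{0..<t}. \<phi> v = x} - {u}" using True ji by auto
      moreover have "u \<in> {v\<in>{0..<t}. \<phi> v = x}" using True i u by auto
      ultimately show ?thesis using True False ji unfolding cnt_def by simp
    next
      case False2: False
      have "{v\<in>{0..<t}. (\<phi>(u := j)) v = x} = {v\<in>{0..<t}. \<phi> v = x}" using False False2 i by auto
      thus ?thesis using False False2 unfolding cnt_def by simp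
    qed
  qed
qed

lemma cnt_relabel:
  assumes inj: "inj_on h B" and img: "\<And>v. v < t \<Longrightarrow> \<phi> v \<in> B" and y: "y \<in> B"
  shows "cnt t (\<lambda>v. h (\<phi> v)) (h y) = cnt t \<phi> y"
proof -
  have "{v\<in>{0..<t}. h (\<phi> v) = h y} = {v\<in>{0..<t}. \<phi> v = y}"
    using inj img y by (auto dest: inj_onD)
  thus ?thesis unfolding cnt_def by simp
qed

lemma cnt_restrict: "cnt t (restrict f {0..<t}) = cnt t f"
  unfolding cnt_def by (intro ext arg_cong[where f=card]) auto

lemma cnt_cong: "(\<And>v. v < t \<Longrightarrow> f v = g v) \<Longrightarrow> cnt t f = cnt t g"
  unfolding cnt_def by (intro ext arg_cong[where f=card]) auto

lemma homsD:
  assumes "\<phi> \<in> homs t E n P"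
  shows "\<And>v. v < t \<Longrightarrow> \<phi> v < n" "\<And>u v. (u,v) \<in> E \<Longrightarrow> P (\<phi> u) (\<phi> v)"
    "\<phi> \<in> {0..<t} \<rightarrow>\<^sub>E {0..<n}"
  using assms unfolding homs_def by (auto simp: PiE_def Pi_def)

lemma homsI:
  assumes "\<And>v. v < t \<Longrightarrow> \<phi> v < n" "\<And>u v. (u,v) \<in> E \<Longrightarrow> P (\<phi> u) (\<phi> v)"
    and "\<And>v. v \<ge> t \<Longrightarrow> \<phi> v = undefined"
  shows "\<phi> \<in> homs t E n P"
  using assms unfolding homs_def by (auto simp: PiE_def Pi_def extensional_def)

lemma K_small:
  assumes E: "E \<subseteq> {0..<t} \<times> {0..<t}"
    and M: "M_convex (cset t E q (\<lambda>i j. i \<noteq> j))" and N: "N \<le> q"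
  shows "M_convex (cset t E N (\<lambda>i j. i \<noteq> j))"
  unfolding M_convex_def
proof (intro ballI allI impI)
  fix a b i assume a: "a \<in> cset t E N (\<lambda>i j. i \<noteq> j)" and b: "b \<in> cset t E N (\<lambda>i j. i \<noteq> j)"
    and ab: "a i > b i"
  obtain c1 where c1: "c1 \<in> homs t E N (\<lambda>i j. i \<noteq> j)" and a_eq: "a = cnt t c1" using a unfolding cset_def by auto
  obtain c2 where c2: "c2 \<in> homs t E N (\<lambda>i j. i \<noteq> j)" and b_eq: "b = cnt t c2" using b unfolding cset_def by auto
  have "\<And>c. c \<in> homs t E N (\<lambda>i j. i \<noteq> j) \<Longrightarrow> c \<in> homs t E q (\<lambda>i j. i \<noteq> j)"
    using N unfolding homs_def by (auto simp: PiE_def Pi_def)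
  hence "a \<in> cset t E q (\<lambda>i j. i \<noteq> j)" "b \<in> cset t E q (\<lambda>i j. i \<noteq> j)"
    using c1 c2 a_eq b_eq unfolding cset_def by auto
  then obtain j where j: "a j < b j" and a': "a(i := a i - 1, j := a j + 1) \<in> cset t E q (\<lambda>i j. i \<noteq> j)"
    using M ab unfolding M_convex_def by blast
  obtain c' where c': "c' \<in> homs t E q (\<lambda>i j. i \<noteq> j)" and c'eq: "a(i := a i - 1, j := a j + 1) = cnt t c'"
    using a' unfolding cset_def by auto
  have jN: "j < N"
  proof (rule ccontr)
    assume "\<not> j < N"
    hence "b j = 0" using b_eq homsD(3)[OF c2] cnt_out by auto
    thus False using j by simp
  qed
  have iN: "i < N"
  proof (rule ccontr)
    assume "\<not> i < N"
    hence "a i = 0" using a_eq homsD(3)[OF c1] cnt_out by auto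
    thus False using ab by simp
  qed
  have "c' \<in> homs t E N (\<lambda>i j. i \<noteq> j)"
  proof -
    have "c' v < N" if v: "v < t" for v
    proof (rule ccontr)
      assume nv: "\<not> c' v < N"
      have "cnt t c' (c' v) > 0" using v cnt_pos_iff by blast
      moreover have "a (c' v) = 0" using nv a_eq homsD(3)[OF c1] cnt_out by auto
      moreover have "cnt t c' (c' v) = (a(i := a i - 1, j := a j + 1)) (c' v)" using c'eq by simp
      moreover have "(a(i := a i - 1, j := a j + 1)) (c' v) = a (c' v)" using nv jN iN by auto
      ultimately show False by simp
    qed
    thus ?thesis using c' unfolding homs_def by (auto simp: PiE_def Pi_def)
  qed
  thus "\<exists>j. a j < b j \<and> a(i := a i - 1, j := a j + 1) \<in> cset t E N (\<lambda>i j. i \<noteq> j)"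
    using j c'eq unfolding cset_def by auto
qed

lemma K_large:
  assumes E: "E \<subseteq> {0..<t} \<times> {0..<t}"
    and M: "M_convex (cset t E q (\<lambda>i j. i \<noteq> j))" and q: "t \<le> q"
  shows "M_convex (cset t E N (\<lambda>i j. i \<noteq> j))"
  unfolding M_convex_def
proof (intro ballI allI impI)
  fix a b i assume a: "a \<in> cset t E N (\<lambda>i j. i \<noteq> j)" and b: "b \<in> cset t E N (\<lambda>i j. i \<noteq> j)"
    and ab: "a i > b i"
  obtain c1 where c1: "c1 \<in> homs t E N (\<lambda>i j. i \<noteq> j)" and a_eq: "a = cnt t c1" using a unfolding cset_def by auto
  obtain c2 where c2: "c2 \<in> homs t E N (\<lambda>i j. i \<noteq> j)" and b_eq: "b = cnt t c2" using b unfolding cset_def by auto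
  obtain u where u: "u < t" "c1 u = i" using ab a_eq cnt_pos_iff[of t c1 i] by auto
  show "\<exists>j. a j < b j \<and> a(i := a i - 1, j := a j + 1) \<in> cset t E N (\<lambda>i j. i \<noteq> j)"
  proof (cases "\<exists>j. a j = 0 \<and> b j > 0")
    case True
    then obtain j where j: "a j = 0" "b j > 0" by blast
    have ji: "j \<noteq> i" using j ab by auto
    obtain w where w: "w < t" "c2 w = j" using j b_eq cnt_pos_iff[of t c2 j] by auto
    have jN: "j < N" using homsD(1)[OF c2 w(1)] w by simp
    have noj: "\<And>v. v < t \<Longrightarrow> c1 v \<noteq> j" using j a_eq cnt_pos_iff[of t c1 j] by auto
    have "c1(u := j) \<in> homs t E N (\<lambda>i j. i \<noteq> j)"
    proof (rule homsI)
      show "\<And>v. v < t \<Longrightarrow> (c1(u := j)) v < N" using homsD(1)[OF c1] jN by auto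
      show "\<And>v. v \<ge> t \<Longrightarrow> (c1(u := j)) v = undefined" using homsD(3)[OF c1] u by (auto simp: PiE_def extensional_def)
      fix x y assume xy: "(x,y) \<in> E"
      have xt: "x < t" "y < t" using xy E by auto
      have "c1 x \<noteq> c1 y" using homsD(2)[OF c1 xy] .
      thus "(c1(u := j)) x \<noteq> (c1(u := j)) y" using noj xt by auto
    qed
    moreover have "cnt t (c1(u := j)) = a(i := a i - 1, j := a j + 1)"
      using cnt_upd[of u t c1 i j, OF u ji] a_eq by simp
    ultimately show ?thesis using j unfolding cset_def by (intro exI[of _ j]) force
  next
    case False
    hence sub: "\<And>j. b j > 0 \<Longrightarrow> a j > 0" by auto
    define B where "B = c1 ` {0..<t}"
    have finB: "finite B" unfolding B_def by simp
    have cardB: "card B \<le> q" using card_image_le[of "{0..<t}" c1] q unfolding B_def by simp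
    obtain h where h: "bij_betw h B {0..<card B}" using ex_bij_betw_finite_nat[OF finB] by blast
    have injh: "inj_on h B" using h bij_betw_def by blast
    have hB: "\<And>y. y \<in> B \<Longrightarrow> h y < card B" using h by (auto simp: bij_betw_def)
    have c1B: "\<And>v. v < t \<Longrightarrow> c1 v \<in> B" unfolding B_def by auto
    have c2B: "\<And>v. v < t \<Longrightarrow> c2 v \<in> B"
    proof -
      fix v assume v: "v < t"
      have "b (c2 v) > 0" using b_eq cnt_pos_iff v by blast
      hence "a (c2 v) > 0" by (rule sub)
      then obtain w where "w < t" "c1 w = c2 v" using a_eq cnt_pos_iff by metis
      thus "c2 v \<in> B" unfolding B_def by force
    qed
    have aB: "\<And>y. y \<notin> B \<Longrightarrow> a y = 0"
      unfolding a_eq B_def cnt_def by auto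
    have iB: "i \<in> B" using u c1B by auto
    define d1 where "d1 = restrict (\<lambda>v. h (c1 v)) {0..<t}"
    define d2 where "d2 = restrict (\<lambda>v. h (c2 v)) {0..<t}"
    have d1: "d1 \<in> homs t E q (\<lambda>i j. i \<noteq> j)"
    proof (rule homsI)
      show "\<And>v. v < t \<Longrightarrow> d1 v < q" unfolding d1_def using hB c1B cardB by fastforce
      show "\<And>v. v \<ge> t \<Longrightarrow> d1 v = undefined" unfolding d1_def by auto
      fix x y assume xy: "(x,y) \<in> E"
      have xt: "x < t" "y < t" using xy E by auto
      have "c1 x \<noteq> c1 y" using homsD(2)[OF c1 xy] .
      thus "d1 x \<noteq> d1 y" unfolding d1_def using xt injh c1B by (auto dest: inj_onD)
    qed
    have d2: "d2 \<in> homs t E q (\<lambda>i j. i \<noteq> j)"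
    proof (rule homsI)
      show "\<And>v. v < t \<Longrightarrow> d2 v < q" unfolding d2_def using hB c2B cardB by fastforce
      show "\<And>v. v \<ge> t \<Longrightarrow> d2 v = undefined" unfolding d2_def by auto
      fix x y assume xy: "(x,y) \<in> E"
      have xt: "x < t" "y < t" using xy E by auto
      have "c2 x \<noteq> c2 y" using homsD(2)[OF c2 xy] .
      thus "d2 x \<noteq> d2 y" unfolding d2_def using xt injh c2B by (auto dest: inj_onD)
    qed
    have cd1: "\<And>y. y \<in> B \<Longrightarrow> cnt t d1 (h y) = a y"
      unfolding d1_def cnt_restrict a_eq using cnt_relabel[OF injh c1B] by simp
    have cd2: "\<And>y. y \<in> B \<Longrightarrow> cnt t d2 (h y) = b y"
      unfolding d2_def cnt_restrict b_eq using cnt_relabel[OF injh c2B] by simp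
    have cd1z: "\<And>z. z \<notin> h ` B \<Longrightarrow> cnt t d1 z = 0"
      unfolding d1_def cnt_def using c1B by auto
    have cd2z: "\<And>z. z \<notin> h ` B \<Longrightarrow> cnt t d2 z = 0"
      unfolding d2_def cnt_def using c2B by auto
    have "cnt t d1 (h i) > cnt t d2 (h i)" using cd1[OF iB] cd2[OF iB] ab by simp
    moreover have "cnt t d1 \<in> cset t E q (\<lambda>i j. i \<noteq> j)" "cnt t d2 \<in> cset t E q (\<lambda>i j. i \<noteq> j)"
      using d1 d2 unfolding cset_def by auto
    ultimately obtain j' where j': "cnt t d1 j' < cnt t d2 j'"
      and d'': "(cnt t d1)(h i := cnt t d1 (h i) - 1, j' := cnt t d1 j' + 1) \<in> cset t E q (\<lambda>i j. i \<noteq> j)"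
      using M unfolding M_convex_def by blast
    obtain d' where d': "d' \<in> homs t E q (\<lambda>i j. i \<noteq> j)"
      and d'eq: "(cnt t d1)(h i := cnt t d1 (h i) - 1, j' := cnt t d1 j' + 1) = cnt t d'"
      using d'' unfolding cset_def by auto
    have "j' \<in> h ` B" using j' cd2z by (metis not_less0)
    then obtain j where jB: "j \<in> B" and jj: "j' = h j" by blast
    have ajb: "a j < b j" using j' cd1[OF jB] cd2[OF jB] jj by simp
    have ji: "j \<noteq> i" using ajb ab by auto
    have hji: "h j \<noteq> h i" using ji injh jB iB by (auto dest: inj_onD)
    have d'B: "d' v \<in> h ` B" if v: "v < t" for v
    proof (rule ccontr)
      assume nB: "d' v \<notin> h ` B"
      have "cnt t d' (d' v) > 0" using v cnt_pos_iff by blast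
      moreover have "d' v \<noteq> h i" "d' v \<noteq> j'" using nB iB jB jj by auto
      ultimately have "cnt t d1 (d' v) > 0" using d'eq by (metis fun_upd_other)
      thus False using cd1z nB by simp
    qed
    define g where "g = the_inv_into B h"
    have ginv: "\<And>y. y \<in> B \<Longrightarrow> g (h y) = y" unfolding g_def using the_inv_into_f_f[OF injh] by blast
    have gB: "\<And>z. z \<in> h ` B \<Longrightarrow> g z \<in> B" unfolding g_def using the_inv_into_into[OF injh] by blast
    have hg: "\<And>z. z \<in> h ` B \<Longrightarrow> h (g z) = z" unfolding g_def using f_the_inv_into_f[OF injh] by blast
    define c' where "c' = restrict (\<lambda>v. g (d' v)) {0..<t}"
    have BN: "\<And>y. y \<in> B \<Longrightarrow> y < N" unfolding B_def using homsD(1)[OF c1] by auto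
    have c'h: "c' \<in> homs t E N (\<lambda>i j. i \<noteq> j)"
    proof (rule homsI)
      show "\<And>v. v < t \<Longrightarrow> c' v < N" unfolding c'_def using gB d'B BN by auto
      show "\<And>v. v \<ge> t \<Longrightarrow> c' v = undefined" unfolding c'_def by auto
      fix x y assume xy: "(x,y) \<in> E"
      have xt: "x < t" "y < t" using xy E by auto
      have "d' x \<noteq> d' y" using homsD(2)[OF d' xy] .
      moreover have "h (g (d' x)) = d' x" "h (g (d' y)) = d' y" using hg d'B xt by auto
      ultimately have "g (d' x) \<noteq> g (d' y)" by metis
      thus "c' x \<noteq> c' y" unfolding c'_def using xt by simp
    qed
    have "cnt t c' = a(i := a i - 1, j := a j + 1)"
    proof
      fix y
      show "cnt t c' y = (a(i := a i - 1, j := a j + 1)) y"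
      proof (cases "y \<in> B")
        case True
        have "{v\<in>{0..<t}. c' v = y} = {v\<in>{0..<t}. d' v = h y}"
        proof -
          have "(g (d' v) = y) \<longleftrightarrow> (d' v = h y)" if v: "v < t" for v
          proof
            assume "g (d' v) = y" thus "d' v = h y" using hg d'B v by force
          next
            assume "d' v = h y" thus "g (d' v) = y" using ginv True by simp
          qed
          thus ?thesis unfolding c'_def by auto
        qed
        hence "cnt t c' y = cnt t d' (h y)" unfolding cnt_def by simp
        also have "\<dots> = ((cnt t d1)(h i := cnt t d1 (h i) - 1, j' := cnt t d1 j' + 1)) (h y)"
          using d'eq by simp
        also have "\<dots> = (a(i := a i - 1, j := a j + 1)) y"
        proof -
          have e1: "h y = h i \<longleftrightarrow> y = i" using True iB injh by (auto dest: inj_onD)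
          have e2: "h y = h j \<longleftrightarrow> y = j" using True jB injh by (auto dest: inj_onD)
          show ?thesis using e1 e2 jj cd1[OF True] cd1[OF iB] cd1[OF jB] hji by auto
        qed
        finally show ?thesis .
      next
        case False
        have "cnt t c' y = 0"
          unfolding cnt_def c'_def using False gB d'B by auto
        moreover have "y \<noteq> i" "y \<noteq> j" using False iB jB by auto
        ultimately show ?thesis using aB[OF False] by simp
      qed
    qed
    thus ?thesis using ajb c'h unfolding cset_def by (intro exI[of _ j]) force
  qed
qed

lemma K_all:
  assumes E: "E \<subseteq> {0..<t} \<times> {0..<t}"
    and M: "M_convex (cset t E q (\<lambda>i j. i \<noteq> j))" and q: "t \<le> q"
  shows "M_convex (cset t E N (\<lambda>i j. i \<noteq> j))"
  using K_small[OF E M] K_large[OF E M q] by (cases "N \<le> q") auto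

lemma card_group:
  assumes "\<And>u. u < t \<Longrightarrow> c u < N"
  shows "card {u\<in>{0..<t}. f (c u) = z} = (\<Sum>y\<in>{y. y < N \<and> f y = z}. cnt t c y)"
proof -
  let ?S = "{u\<in>{0..<t}. f (c u) = z}"
  let ?X = "{y. y < N \<and> f y = z}"
  have "(\<Sum>y\<in>?X. \<Sum>u\<in>{u\<in>?S. c u = y}. (1::nat)) = (\<Sum>u\<in>?S. 1)"
    by (rule sum.group) (use assms in auto)
  moreover have "\<And>y. y \<in> ?X \<Longrightarrow> (\<Sum>u\<in>{u\<in>?S. c u = y}. (1::nat)) = cnt t c y"
  proof -
    fix y assume "y \<in> ?X"
    hence "{u\<in>?S. c u = y} = {v\<in>{0..<t}. c v = y}" by auto
    thus "(\<Sum>u\<in>{u\<in>?S. c u = y}. (1::nat)) = cnt t c y" unfolding cnt_def by simp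
  qed
  ultimately show ?thesis by simp
qed

lemma sum_upd2:
  assumes fin: "finite X" and k: "f k \<ge> 1" and km: "k \<noteq> m"
  shows "(\<Sum>y\<in>X. (f(k := f k - 1, m := f m + 1)) y) + (if k \<in> X then 1 else 0)
       = (\<Sum>y\<in>X. f y) + (if m \<in> X then (1::nat) else 0)"
proof -
  define g where "g = f(k := f k - 1, m := f m + 1)"
  have gi: "int (g y) = int (f y) - (if y = k then 1 else 0) + (if y = m then 1 else 0)" for y
    unfolding g_def using k km by auto
  have "int (\<Sum>y\<in>X. g y) = (\<Sum>y\<in>X. int (f y)) - (\<Sum>y\<in>X. (if y = k then 1 else 0)) + (\<Sum>y\<in>X. (if y = m then 1 else 0))"
    by (simp add: gi sum.distrib sum_subtractf)
  also have "(\<Sum>y\<in>X. (if y = k then 1 else 0)) = (if k \<in> X then (1::int) else 0)"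
    using fin by (simp add: sum.delta)
  also have "(\<Sum>y\<in>X. (if y = m then 1 else 0)) = (if m \<in> X then (1::int) else 0)"
    using fin by (simp add: sum.delta)
  finally have "int (\<Sum>y\<in>X. g y) = int (\<Sum>y\<in>X. f y) - (if k \<in> X then 1 else 0) + (if m \<in> X then 1 else 0)"
    by simp
  hence h: "int (\<Sum>y\<in>X. g y) + (if k \<in> X then 1 else 0) = int (\<Sum>y\<in>X. f y) + (if m \<in> X then 1 else 0)"
    by simp
  have "int ((\<Sum>y\<in>X. g y) + (if k \<in> X then 1 else 0)) = int ((\<Sum>y\<in>X. f y) + (if m \<in> X then 1 else 0))"
    using h by (simp add: of_nat_add of_bool_def[symmetric] del: of_bool_def)
  thus ?thesis unfolding g_def by (simp only: of_nat_eq_iff)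
qed

locale comb =
  fixes t :: nat and E :: "(nat \<times> nat) set" and n :: nat and adj :: "nat \<Rightarrow> nat \<Rightarrow> bool"
  assumes E: "E \<subseteq> {(u,v). u < v \<and> v < t}"
    and inc: "\<And>u. u < t \<Longrightarrow> \<exists>v. (u,v) \<in> E \<or> (v,u) \<in> E"
    and sym: "\<And>x y. x < n \<Longrightarrow> y < n \<Longrightarrow> adj x y = adj y x"
    and tr: "\<And>x y z. x < n \<Longrightarrow> y < n \<Longrightarrow> z < n \<Longrightarrow> (\<exists>l<n. adj y l) \<Longrightarrow>
              \<not> adj x y \<Longrightarrow> \<not> adj y z \<Longrightarrow> \<not> adj x z"
begin

definition NI where "NI x \<longleftrightarrow> x < n \<and> (\<exists>l<n. adj x l)"
definition rep where "rep x = (LEAST z. NI z \<and> \<not> adj x z)"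
definition blk where "blk x = (if adj x x then n else rep x)"
definition NIs where "NIs = {x. NI x}"
abbreviation H where "H \<equiv> homs t E n adj"

lemma finNIs: "finite NIs" unfolding NIs_def NI_def by auto

lemma Et: "(u,v) \<in> E \<Longrightarrow> u < t \<and> v < t \<and> u \<noteq> v" using E by auto

lemma trNI: "NI x \<Longrightarrow> NI y \<Longrightarrow> NI z \<Longrightarrow> \<not> adj x y \<Longrightarrow> \<not> adj y z \<Longrightarrow> \<not> adj x z"
  using tr unfolding NI_def by blast

lemma symNI: "NI x \<Longrightarrow> NI y \<Longrightarrow> adj x y = adj y x" using sym unfolding NI_def by blast

lemma hom_NI: assumes "\<phi> \<in> H" "u < t" shows "NI (\<phi> u)"
proof -
  obtain v where "(u,v) \<in> E \<or> (v,u) \<in> E" using inc[OF assms(2)] by blast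
  thus ?thesis
  proof
    assume e: "(u,v) \<in> E"
    hence "adj (\<phi> u) (\<phi> v)" "v < t" using homsD(2)[OF assms(1) e] Et[OF e] by auto
    thus ?thesis unfolding NI_def using homsD(1)[OF assms(1)] assms(2) by blast
  next
    assume e: "(v,u) \<in> E"
    hence "adj (\<phi> v) (\<phi> u)" "v < t" using homsD(2)[OF assms(1) e] Et[OF e] by auto
    thus ?thesis unfolding NI_def using homsD(1)[OF assms(1)] assms(2) sym by metis
  qed
qed

lemma loop_adj: "NI x \<Longrightarrow> NI y \<Longrightarrow> adj x x \<Longrightarrow> adj x y"
  using trNI[of x y x] symNI[of x y] by blast

lemma rep_props: assumes "NI x" "\<not> adj x x" shows "NI (rep x)" "\<not> adj x (rep x)" "rep x \<le> x"
proof -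
  have ex: "NI x \<and> \<not> adj x x" using assms by simp
  show "NI (rep x)" "\<not> adj x (rep x)" unfolding rep_def using LeastI[of "\<lambda>z. NI z \<and> \<not> adj x z", OF ex] by auto
  show "rep x \<le> x" unfolding rep_def using Least_le[of "\<lambda>z. NI z \<and> \<not> adj x z", OF ex] .
qed

lemma rep_eq: assumes "NI x" "NI y" "\<not> adj x y" shows "rep x = rep y"
proof -
  have "(\<lambda>z. NI z \<and> \<not> adj x z) = (\<lambda>z. NI z \<and> \<not> adj y z)"
  proof
    fix z
    have "NI z \<Longrightarrow> \<not> adj x z \<Longrightarrow> \<not> adj y z" using trNI[of y x z] symNI[of x y] assms by blast
    moreover have "NI z \<Longrightarrow> \<not> adj y z \<Longrightarrow> \<not> adj x z" using trNI[of x y z] assms by blast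
    ultimately show "(NI z \<and> \<not> adj x z) = (NI z \<and> \<not> adj y z)" by blast
  qed
  thus ?thesis unfolding rep_def by simp
qed

lemma rep_same_nadj: assumes "NI x" "NI y" "\<not> adj x x" "\<not> adj y y" "rep x = rep y" shows "\<not> adj x y"
proof -
  have r: "NI (rep x)" "\<not> adj x (rep x)" "\<not> adj y (rep x)" using rep_props assms by metis+
  hence "\<not> adj (rep x) y" using symNI[of y "rep x"] assms by simp
  thus ?thesis using trNI[of x "rep x" y] r assms by blast
qed

lemma rep_idem: assumes "NI x" "\<not> adj x x" shows "\<not> adj (rep x) (rep x)" "rep (rep x) = rep x"
proof -
  have r: "NI (rep x)" "\<not> adj x (rep x)" using rep_props assms by auto
  hence r2: "\<not> adj (rep x) x" using symNI assms by blast
  show "\<not> adj (rep x) (rep x)" using trNI[of "rep x" x "rep x"] r r2 assms by blast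
  show "rep (rep x) = rep x" using rep_eq[of "rep x" x] r r2 assms by simp
qed

lemma rep_less: "NI x \<Longrightarrow> \<not> adj x x \<Longrightarrow> rep x < n"
  using rep_props unfolding NI_def by fastforce

lemma blk_n: "NI x \<Longrightarrow> blk x = n \<longleftrightarrow> adj x x"
  unfolding blk_def using rep_less[of x] by auto

lemma blk_less: "NI x \<Longrightarrow> \<not> adj x x \<Longrightarrow> blk x = rep x \<and> rep x < n"
  unfolding blk_def using rep_less by auto

lemma same_blk: assumes "NI x" "NI y" "blk x = blk y" shows "adj y y \<or> \<not> adj x y"
proof (cases "adj y y")
  case True thus ?thesis by simp
next
  case False
  hence "blk y = rep y" "rep y < n" using blk_less assms by auto
  hence "blk x \<noteq> n" using assms by simp
  hence "\<not> adj x x" using blk_n[OF assms(1)] by simp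
  hence "rep x = rep y" using assms blk_less False by auto
  thus ?thesis using rep_same_nadj assms False \<open>\<not> adj x x\<close> by blast
qed

lemma move:
  assumes \<phi>: "\<phi> \<in> H" and u: "u < t" and y: "NI y" and c: "adj y y \<or> \<not> adj (\<phi> u) y"
  shows "\<phi>(u := y) \<in> H"
proof (rule homsI)
  show "\<And>v. v < t \<Longrightarrow> (\<phi>(u := y)) v < n" using homsD(1)[OF \<phi>] y unfolding NI_def by auto
  show "\<And>v. v \<ge> t \<Longrightarrow> (\<phi>(u := y)) v = undefined" using homsD(3)[OF \<phi>] u by (auto simp: PiE_def extensional_def)
  have key: "adj y (\<phi> w)" if w: "w < t" "adj (\<phi> u) (\<phi> w)" for w
  proof (rule ccontr)
    assume na: "\<not> adj y (\<phi> w)"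
    have NIw: "NI (\<phi> w)" using hom_NI[OF \<phi> w(1)] .
    show False
    proof (cases "adj y y")
      case True thus False using loop_adj[OF y NIw] na by simp
    next
      case False
      hence "\<not> adj (\<phi> u) y" using c by simp
      thus False using trNI[OF hom_NI[OF \<phi> u] y NIw] na w(2) by blast
    qed
  qed
  fix x w assume e: "(x,w) \<in> E"
  have xw: "x < t" "w < t" "x \<noteq> w" using Et[OF e] by auto
  have ed: "adj (\<phi> x) (\<phi> w)" using homsD(2)[OF \<phi> e] .
  show "adj ((\<phi>(u := y)) x) ((\<phi>(u := y)) w)"
  proof (cases "x = u")
    case True thus ?thesis using key[of w] xw ed by auto
  next
    case False
    show ?thesis
    proof (cases "w = u")
      case True
      have "adj (\<phi> u) (\<phi> x)" using ed True symNI hom_NI[OF \<phi>] xw by metis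
      hence "adj y (\<phi> x)" using key[of x] xw by auto
      hence "adj (\<phi> x) y" using symNI y hom_NI[OF \<phi> xw(1)] by metis
      thus ?thesis using True False by simp
    next
      case False2: False
      thus ?thesis using False ed by simp
    qed
  qed
qed

lemma block_sum:
  assumes \<phi>: "\<phi> \<in> H"
  shows "(\<Sum>x\<in>{x\<in>NIs. blk x = z}. cnt t \<phi> x) = card {u\<in>{0..<t}. blk (\<phi> u) = z}"
proof -
  let ?S = "{u\<in>{0..<t}. blk (\<phi> u) = z}"
  let ?X = "{x\<in>NIs. blk x = z}"
  have "(\<Sum>x\<in>?X. \<Sum>u\<in>{u\<in>?S. \<phi> u = x}. (1::nat)) = (\<Sum>u\<in>?S. 1)"
    by (rule sum.group) (use finNIs hom_NI[OF \<phi>] in \<open>auto simp: NIs_def\<close>)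
  moreover have "\<And>x. x \<in> ?X \<Longrightarrow> (\<Sum>u\<in>{u\<in>?S. \<phi> u = x}. (1::nat)) = cnt t \<phi> x"
  proof -
    fix x assume "x \<in> ?X"
    hence "{u\<in>?S. \<phi> u = x} = {v\<in>{0..<t}. \<phi> v = x}" by auto
    thus "(\<Sum>u\<in>{u\<in>?S. \<phi> u = x}. (1::nat)) = cnt t \<phi> x" unfolding cnt_def by simp
  qed
  ultimately show ?thesis by simp
qed

lemma cnt_NI: "\<phi> \<in> H \<Longrightarrow> cnt t \<phi> x > 0 \<Longrightarrow> NI x"
  using cnt_pos_iff hom_NI by metis

end

context comb begin

lemma redistribute:
  assumes \<phi>: "\<phi> \<in> H" and a'NI: "\<And>x. a' x > 0 \<Longrightarrow> NI x"
    and bs: "\<And>z. (\<Sum>x\<in>{x\<in>NIs. blk x = z}. a' x) = card {u\<in>{0..<t}. blk (\<phi> u) = z}"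
  shows "a' \<in> cset t E n adj"
  using \<phi> bs
proof (induction "\<Sum>x\<in>NIs. cnt t \<phi> x - a' x" arbitrary: \<phi> rule: less_induct)
  case less
  note \<phi> = less.prems(1) and bs = less.prems(2)
  have finX: "\<And>z. finite {x\<in>NIs. blk x = z}" using finNIs by auto
  have bsc: "\<And>z. (\<Sum>x\<in>{x\<in>NIs. blk x = z}. a' x) = (\<Sum>x\<in>{x\<in>NIs. blk x = z}. cnt t \<phi> x)"
    using bs block_sum[OF \<phi>] by simp
  show ?case
  proof (cases "\<exists>x\<in>NIs. cnt t \<phi> x > a' x")
    case False
    have "a' = cnt t \<phi>"
    proof
      fix x
      show "a' x = cnt t \<phi> x"
      proof (cases "NI x")
        case False
        thus ?thesis using a'NI cnt_NI[OF \<phi>] by (metis neq0_conv)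
      next
        case True
        have le: "\<And>y. y \<in> {x\<in>NIs. blk x = blk x} \<Longrightarrow> cnt t \<phi> y \<le> a' y" using \<open>\<not> (\<exists>x\<in>NIs. cnt t \<phi> x > a' x)\<close> by auto
        show ?thesis
        proof (rule ccontr)
          assume "a' x \<noteq> cnt t \<phi> x"
          hence "cnt t \<phi> x < a' x" using le[of x] True by (auto simp: NIs_def)
          hence "(\<Sum>y\<in>{y\<in>NIs. blk y = blk x}. cnt t \<phi> y) < (\<Sum>y\<in>{y\<in>NIs. blk y = blk x}. a' y)"
            using True le by (intro sum_strict_mono_ex1[OF finX]) (auto simp: NIs_def)
          thus False using bsc[of "blk x"] by simp
        qed
      qed
    qed
    thus ?thesis using \<phi> unfolding cset_def by auto
  next
    case True
    then obtain x where x: "x \<in> NIs" "cnt t \<phi> x > a' x" by blast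
    define X where "X = {y\<in>NIs. blk y = blk x}"
    have xX: "x \<in> X" using x unfolding X_def by auto
    obtain y where y: "y \<in> X" "cnt t \<phi> y < a' y"
    proof (rule ccontr)
      assume "\<not> thesis"
      hence ge: "\<And>y. y \<in> X \<Longrightarrow> a' y \<le> cnt t \<phi> y" using that by fastforce
      have "(\<Sum>y\<in>X. a' y) < (\<Sum>y\<in>X. cnt t \<phi> y)"
        using ge xX x(2) unfolding X_def by (intro sum_strict_mono_ex1[OF finX]) (auto simp: X_def)
      thus False using bsc[of "blk x"] unfolding X_def by simp
    qed
    have yx: "y \<noteq> x" using y x by auto
    have NIx: "NI x" and NIy: "NI y" and bxy: "blk x = blk y" using x y unfolding X_def NIs_def by auto
    obtain u where u: "u < t" "\<phi> u = x" using x(2) cnt_pos_iff[of t \<phi> x] by auto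
    have \<phi>': "\<phi>(u := y) \<in> H"
      using move[OF \<phi> u(1) NIy] same_blk[OF NIx NIy bxy] u by simp
    have cnt': "cnt t (\<phi>(u := y)) = (cnt t \<phi>)(x := cnt t \<phi> x - 1, y := cnt t \<phi> y + 1)"
      using cnt_upd[of u t \<phi> x y, OF u yx] .
    have bs': "\<And>z. (\<Sum>x\<in>{x\<in>NIs. blk x = z}. a' x) = card {v\<in>{0..<t}. blk ((\<phi>(u := y)) v) = z}"
    proof -
      fix z
      have "{v\<in>{0..<t}. blk ((\<phi>(u := y)) v) = z} = {v\<in>{0..<t}. blk (\<phi> v) = z}"
        using u bxy by auto
      thus "(\<Sum>x\<in>{x\<in>NIs. blk x = z}. a' x) = card {v\<in>{0..<t}. blk ((\<phi>(u := y)) v) = z}"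
        using bs[of z] by simp
    qed
    have lt: "(\<Sum>w\<in>NIs. cnt t (\<phi>(u := y)) w - a' w) < (\<Sum>w\<in>NIs. cnt t \<phi> w - a' w)"
    proof (rule sum_strict_mono_ex1[OF finNIs])
      show "\<forall>w\<in>NIs. cnt t (\<phi>(u := y)) w - a' w \<le> cnt t \<phi> w - a' w"
        unfolding cnt' using y(2) by auto
      show "\<exists>w\<in>NIs. cnt t (\<phi>(u := y)) w - a' w < cnt t \<phi> w - a' w"
        using x yx unfolding cnt' by (intro bexI[of _ x]) auto
    qed
    show ?thesis using less.hyps[OF lt \<phi>' bs'] .
  qed
qed

definition Lset where "Lset \<theta> = {u\<in>{0..<t}. adj (\<theta> u) (\<theta> u)}"
definition hb where "hb \<theta> = (SOME h. bij_betw h (Lset \<theta>) {0..<card (Lset \<theta>)})"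
definition col where "col \<theta> = restrict (\<lambda>u. if adj (\<theta> u) (\<theta> u) then n + hb \<theta> u else rep (\<theta> u)) {0..<t}"
definition cblk where "cblk y = (if y \<ge> n then n else y)"

lemma hb_bij: "bij_betw (hb \<theta>) (Lset \<theta>) {0..<card (Lset \<theta>)}"
proof -
  have "finite (Lset \<theta>)" unfolding Lset_def by simp
  from ex_bij_betw_finite_nat[OF this] show ?thesis unfolding hb_def by (rule someI_ex)
qed

lemma card_L: "card (Lset \<theta>) \<le> t"
proof -
  have "card (Lset \<theta>) \<le> card {0..<t}" unfolding Lset_def by (rule card_mono) auto
  thus ?thesis by simp
qed

lemma col_app: "u < t \<Longrightarrow> col \<theta> u = (if adj (\<theta> u) (\<theta> u) then n + hb \<theta> u else rep (\<theta> u))"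
  unfolding col_def by simp

lemma hb_less: "u < t \<Longrightarrow> adj (\<theta> u) (\<theta> u) \<Longrightarrow> hb \<theta> u < card (Lset \<theta>)"
  using hb_bij[of \<theta>] unfolding bij_betw_def Lset_def by auto

lemma col_hom: assumes \<theta>: "\<theta> \<in> H" shows "col \<theta> \<in> homs t E (n + t) (\<lambda>i j. i \<noteq> j)"
proof (rule homsI)
  show "\<And>v. v \<ge> t \<Longrightarrow> col \<theta> v = undefined" unfolding col_def by simp
  show "\<And>v. v < t \<Longrightarrow> col \<theta> v < n + t"
  proof -
    fix v assume v: "v < t"
    show "col \<theta> v < n + t"
    proof (cases "adj (\<theta> v) (\<theta> v)")
      case True thus ?thesis using col_app[OF v] hb_less[of v \<theta>, OF v True] card_L[of \<theta>] by simp
    next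
      case False thus ?thesis using col_app[OF v] rep_less[OF hom_NI[OF \<theta> v] False] by simp
    qed
  qed
  fix x w assume e: "(x,w) \<in> E"
  have xw: "x < t" "w < t" "x \<noteq> w" using Et[OF e] by auto
  have ed: "adj (\<theta> x) (\<theta> w)" using homsD(2)[OF \<theta> e] .
  have NIx: "NI (\<theta> x)" and NIw: "NI (\<theta> w)" using hom_NI[OF \<theta>] xw by auto
  show "col \<theta> x \<noteq> col \<theta> w"
  proof (cases "adj (\<theta> x) (\<theta> x)"; cases "adj (\<theta> w) (\<theta> w)")
    assume lx: "adj (\<theta> x) (\<theta> x)" and lw: "adj (\<theta> w) (\<theta> w)"
    have "hb \<theta> x \<noteq> hb \<theta> w" using hb_bij[of \<theta>] xw lx lw unfolding bij_betw_def Lset_def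
      by (auto dest: inj_onD)
    thus ?thesis using col_app xw lx lw by simp
  next
    assume lx: "adj (\<theta> x) (\<theta> x)" and lw: "\<not> adj (\<theta> w) (\<theta> w)"
    thus ?thesis using col_app xw rep_less[OF NIw lw] by simp
  next
    assume lx: "\<not> adj (\<theta> x) (\<theta> x)" and lw: "adj (\<theta> w) (\<theta> w)"
    thus ?thesis using col_app xw rep_less[OF NIx lx] by simp
  next
    assume lx: "\<not> adj (\<theta> x) (\<theta> x)" and lw: "\<not> adj (\<theta> w) (\<theta> w)"
    have "rep (\<theta> x) \<noteq> rep (\<theta> w)" using rep_same_nadj[OF NIx NIw lx lw] ed by blast
    thus ?thesis using col_app xw lx lw by simp
  qed
qed

lemma col_cblk: assumes \<theta>: "\<theta> \<in> H" and u: "u < t" shows "cblk (col \<theta> u) = blk (\<theta> u)"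
proof (cases "adj (\<theta> u) (\<theta> u)")
  case True thus ?thesis using col_app[OF u] unfolding cblk_def blk_def by simp
next
  case False thus ?thesis using col_app[OF u] rep_less[OF hom_NI[OF \<theta> u] False] unfolding cblk_def blk_def by simp
qed

lemma col_low: assumes \<theta>: "\<theta> \<in> H" and y: "y < n"
  shows "cnt t (col \<theta>) y = card {u\<in>{0..<t}. blk (\<theta> u) = y}"
proof -
  have "{u\<in>{0..<t}. col \<theta> u = y} = {u\<in>{0..<t}. blk (\<theta> u) = y}"
  proof (rule Set.set_eqI)
    fix u
    show "u \<in> {u\<in>{0..<t}. col \<theta> u = y} \<longleftrightarrow> u \<in> {u\<in>{0..<t}. blk (\<theta> u) = y}"
      using col_cblk[OF \<theta>, of u] y unfolding cblk_def by (cases "col \<theta> u \<ge> n") auto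
  qed
  thus ?thesis unfolding cnt_def by simp
qed

lemma L_card: assumes \<theta>: "\<theta> \<in> H" shows "card (Lset \<theta>) = card {u\<in>{0..<t}. blk (\<theta> u) = n}"
proof -
  have "Lset \<theta> = {u\<in>{0..<t}. blk (\<theta> u) = n}"
    unfolding Lset_def using blk_n hom_NI[OF \<theta>] by auto
  thus ?thesis by simp
qed

lemma col_high: assumes \<theta>: "\<theta> \<in> H"
  shows "cnt t (col \<theta>) (n + r) = (if r < card (Lset \<theta>) then 1 else 0)"
proof -
  have S: "{u\<in>{0..<t}. col \<theta> u = n + r} = {u\<in>Lset \<theta>. hb \<theta> u = r}"
  proof (rule Set.set_eqI)
    fix u
    show "u \<in> {u\<in>{0..<t}. col \<theta> u = n + r} \<longleftrightarrow> u \<in> {u\<in>Lset \<theta>. hb \<theta> u = r}"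
    proof (cases "u < t \<and> adj (\<theta> u) (\<theta> u)")
      case True thus ?thesis using col_app[of u \<theta>] unfolding Lset_def by auto
    next
      case False
      moreover have "u < t \<Longrightarrow> \<not> adj (\<theta> u) (\<theta> u) \<Longrightarrow> col \<theta> u \<noteq> n + r"
        using col_app[of u \<theta>] rep_less[OF hom_NI[OF \<theta>]] by fastforce
      ultimately show ?thesis unfolding Lset_def by auto
    qed
  qed
  show ?thesis
  proof (cases "r < card (Lset \<theta>)")
    case True
    then obtain u where u: "u \<in> Lset \<theta>" "hb \<theta> u = r" using hb_bij[of \<theta>] unfolding bij_betw_def
      by (metis atLeastLessThan_iff imageE zero_le)
    have "{u\<in>Lset \<theta>. hb \<theta> u = r} = {u}"
      using u hb_bij[of \<theta>] unfolding bij_betw_def by (auto dest: inj_onD)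
    hence E1: "{u\<in>{0..<t}. col \<theta> u = n + r} = {u}" using S by simp
    show ?thesis unfolding cnt_def E1 using True by simp
  next
    case False
    have "{u\<in>Lset \<theta>. hb \<theta> u = r} = {}"
      using False hb_bij[of \<theta>] unfolding bij_betw_def by auto
    hence E0: "{u\<in>{0..<t}. col \<theta> u = n + r} = {}" using S by simp
    show ?thesis unfolding cnt_def E0 using False by simp
  qed
qed

end

context comb begin

lemma SB_le_t: "card {u\<in>{0..<t}. P u} \<le> t"
proof -
  have "card {u\<in>{0..<t}. P u} \<le> card {0..<t}" by (rule card_mono) auto
  thus ?thesis by simp
qed

theorem main_M:
  assumes K: "\<And>N. M_convex (cset t E N (\<lambda>i j. i \<noteq> j))"
  shows "M_convex (cset t E n adj)"
  unfolding M_convex_def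
proof (intro ballI allI impI)
  fix a b i assume a: "a \<in> cset t E n adj" and b: "b \<in> cset t E n adj" and ab: "a i > b i"
  obtain \<phi> where \<phi>: "\<phi> \<in> H" and a_eq: "a = cnt t \<phi>" using a unfolding cset_def by auto
  obtain \<psi> where \<psi>: "\<psi> \<in> H" and b_eq: "b = cnt t \<psi>" using b unfolding cset_def by auto
  obtain u where u: "u < t" "\<phi> u = i" using ab a_eq cnt_pos_iff[of t \<phi> i] by auto
  have NIi: "NI i" using hom_NI[OF \<phi> u(1)] u by simp
  show "\<exists>j. a j < b j \<and> a(i := a i - 1, j := a j + 1) \<in> cset t E n adj"
  proof (cases "\<exists>j. a j < b j \<and> (adj j j \<or> \<not> adj i j)")
    case True
    then obtain j where j: "a j < b j" "adj j j \<or> \<not> adj i j" by blast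
    have NIj: "NI j" using cnt_NI[OF \<psi>] j b_eq by (metis gr_zeroI not_less0)
    have ji: "j \<noteq> i" using j ab by auto
    have "\<phi>(u := j) \<in> H" using move[OF \<phi> u(1) NIj] j u by simp
    moreover have "cnt t (\<phi>(u := j)) = a(i := a i - 1, j := a j + 1)"
      using cnt_upd[of u t \<phi> i j, OF u ji] a_eq by simp
    ultimately show ?thesis using j unfolding cset_def by (intro exI[of _ j]) force
  next
    case False
    hence F: "\<And>j. a j < b j \<Longrightarrow> \<not> adj j j \<and> adj i j" by auto
    define SB where "SB \<theta> z = card {u\<in>{0..<t}. blk (\<theta> u) = z}" for \<theta> z
    define X where "X z = {x\<in>NIs. blk x = z}" for z
    have finX: "\<And>z. finite (X z)" unfolding X_def using finNIs by auto
    have SBa: "\<And>z. SB \<phi> z = (\<Sum>x\<in>X z. a x)" unfolding SB_def X_def a_eq using block_sum[OF \<phi>] by simp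
    have SBb: "\<And>z. SB \<psi> z = (\<Sum>x\<in>X z. b x)" unfolding SB_def X_def b_eq using block_sum[OF \<psi>] by simp
    define \<beta> where "\<beta> = blk i"
    have iX: "i \<in> X \<beta>" unfolding X_def \<beta>_def NIs_def using NIi by simp
    have geb: "\<And>x. x \<in> X \<beta> \<Longrightarrow> b x \<le> a x"
    proof (rule ccontr)
      fix x assume x: "x \<in> X \<beta>" and "\<not> b x \<le> a x"
      hence "a x < b x" by simp
      hence "\<not> adj x x \<and> adj i x" using F by blast
      moreover have "adj x x \<or> \<not> adj i x" using same_blk[OF NIi, of x] x unfolding X_def \<beta>_def NIs_def by auto
      ultimately show False by blast
    qed
    have gtb: "SB \<psi> \<beta> < SB \<phi> \<beta>"
      unfolding SBa SBb by (rule sum_strict_mono_ex1[OF finX]) (use geb iX ab in auto)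
    have geL: "SB \<psi> n \<le> SB \<phi> n"
    proof -
      have "\<And>x. x \<in> X n \<Longrightarrow> b x \<le> a x"
      proof (rule ccontr)
        fix x assume x: "x \<in> X n" and "\<not> b x \<le> a x"
        hence "\<not> adj x x" using F by simp
        moreover have "adj x x" using x blk_n unfolding X_def NIs_def by auto
        ultimately show False by simp
      qed
      thus ?thesis unfolding SBa SBb by (intro sum_mono) auto
    qed
    have LcardP: "card (Lset \<phi>) = SB \<phi> n" "card (Lset \<psi>) = SB \<psi> n"
      unfolding SB_def using L_card \<phi> \<psi> by auto
    define k where "k = (if \<beta> = n then n + SB \<psi> n else \<beta>)"
    have kcases: "(\<beta> = n \<and> k = n + SB \<psi> n) \<or> (\<beta> < n \<and> k = \<beta>)"
    proof (cases "\<beta> = n")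
      case True thus ?thesis unfolding k_def by simp
    next
      case False
      hence "\<not> adj i i" using blk_n[OF NIi] \<beta>_def by simp
      hence "\<beta> < n" using blk_less[OF NIi] \<beta>_def by simp
      thus ?thesis unfolding k_def using False by simp
    qed
    have kgt: "cnt t (col \<psi>) k < cnt t (col \<phi>) k"
    proof (cases "\<beta> = n")
      case True
      hence "k = n + SB \<psi> n" using kcases by auto
      thus ?thesis using col_high[OF \<phi>] col_high[OF \<psi>] LcardP gtb True by simp
    next
      case False
      hence "\<beta> < n" "k = \<beta>" using kcases by auto
      thus ?thesis using col_low[OF \<phi>] col_low[OF \<psi>] gtb unfolding SB_def by simp
    qed
    have kN: "k < n + t"
      using kcases gtb SB_le_t[of "\<lambda>u. blk (\<phi> u) = n"] unfolding SB_def by auto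
    have kblk: "cblk k = \<beta>" using kcases unfolding cblk_def by auto
    have memb: "cnt t (col \<phi>) \<in> cset t E (n + t) (\<lambda>i j. i \<noteq> j)" "cnt t (col \<psi>) \<in> cset t E (n + t) (\<lambda>i j. i \<noteq> j)"
      using col_hom[OF \<phi>] col_hom[OF \<psi>] unfolding cset_def by auto
    obtain m where m: "cnt t (col \<phi>) m < cnt t (col \<psi>) m"
      and m2: "(cnt t (col \<phi>))(k := cnt t (col \<phi>) k - 1, m := cnt t (col \<phi>) m + 1) \<in> cset t E (n + t) (\<lambda>i j. i \<noteq> j)"
      using K[of "n + t"] memb kgt unfolding M_convex_def by blast
    obtain c' where c': "c' \<in> homs t E (n + t) (\<lambda>i j. i \<noteq> j)"
      and c'eq: "(cnt t (col \<phi>))(k := cnt t (col \<phi>) k - 1, m := cnt t (col \<phi>) m + 1) = cnt t c'"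
      using m2 unfolding cset_def by auto
    have km: "k \<noteq> m" using m kgt by auto
    have mn: "m < n"
    proof (rule ccontr)
      assume "\<not> m < n"
      then obtain r where r: "m = n + r" by (metis le_iff_add not_less)
      have "cnt t (col \<psi>) (n + r) > 0" using m r by simp
      hence "r < SB \<psi> n" using col_high[OF \<psi>, of r] LcardP by (simp split: if_splits)
      moreover have "cnt t (col \<phi>) (n + r) = 0" using m r col_high[OF \<phi>, of r] col_high[OF \<psi>, of r]
        by (simp split: if_splits)
      hence "\<not> r < SB \<phi> n" using col_high[OF \<phi>, of r] LcardP by (simp split: if_splits)
      ultimately show False using geL by simp
    qed
    obtain w where w: "w < t" "col \<psi> w = m" using m cnt_pos_iff[of t "col \<psi>" m] by auto
    have nlw: "\<not> adj (\<psi> w) (\<psi> w)" using w mn col_app[OF w(1), of \<psi>] by (auto split: if_splits)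
    have mrep: "m = rep (\<psi> w)" using w col_app[OF w(1), of \<psi>] nlw by simp
    have NIw: "NI (\<psi> w)" using hom_NI[OF \<psi> w(1)] .
    have NIm: "NI m" and nlm: "\<not> adj m m" and repm: "rep m = m"
      using rep_props[OF NIw nlw] rep_idem[OF NIw nlw] mrep by auto
    have blkm: "blk m = m" using blk_less[OF NIm nlm] repm by simp
    have SBm: "SB \<phi> m < SB \<psi> m" using m col_low[OF \<phi> mn] col_low[OF \<psi> mn] unfolding SB_def by simp
    obtain j where jX: "j \<in> X m" and ajb: "a j < b j"
    proof (rule ccontr)
      assume "\<not> thesis"
      hence "\<And>j. j \<in> X m \<Longrightarrow> b j \<le> a j" using that by fastforce
      hence "SB \<psi> m \<le> SB \<phi> m" unfolding SBa SBb by (intro sum_mono) auto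
      thus False using SBm by simp
    qed
    have NIj: "NI j" and blkj: "blk j = m" using jX unfolding X_def NIs_def by auto
    have ji: "j \<noteq> i" using ajb ab by auto
    define l0 where "l0 = (SOME x. NI x \<and> adj x x)"
    have c'lt: "\<And>v. v < t \<Longrightarrow> c' v < n + t" using homsD(1)[OF c'] .
    have good: "(c' v < n \<and> NI (c' v) \<and> \<not> adj (c' v) (c' v) \<and> rep (c' v) = c' v) \<or>
                (c' v \<ge> n \<and> NI l0 \<and> adj l0 l0)" if v: "v < t" for v
    proof (cases "c' v = m")
      case True thus ?thesis using mn NIm nlm repm by simp
    next
      case False
      have "cnt t c' (c' v) > 0" using v cnt_pos_iff by blast
      hence "cnt t (col \<phi>) (c' v) > 0" using c'eq[symmetric] False
        by (cases "c' v = k") (auto simp del: fun_upd_apply, simp_all)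
      then obtain w' where w': "w' < t" "col \<phi> w' = c' v" using cnt_pos_iff by metis
      have NIw': "NI (\<phi> w')" using hom_NI[OF \<phi> w'(1)] .
      show ?thesis
      proof (cases "c' v < n")
        case True
        hence nl: "\<not> adj (\<phi> w') (\<phi> w')" using w' col_app[OF w'(1), of \<phi>] by (auto split: if_splits)
        hence "c' v = rep (\<phi> w')" using w' col_app[OF w'(1), of \<phi>] by simp
        thus ?thesis using rep_props[OF NIw' nl] rep_idem[OF NIw' nl] True by auto
      next
        case False
        hence lp: "adj (\<phi> w') (\<phi> w')"
          using w' col_app[OF w'(1), of \<phi>] rep_less[OF NIw'] by (auto split: if_splits)
        hence "\<exists>x. NI x \<and> adj x x" using NIw' by blast
        hence "NI l0 \<and> adj l0 l0" unfolding l0_def by (rule someI_ex)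
        thus ?thesis using False by simp
      qed
    qed
    define \<phi>2 where "\<phi>2 = restrict (\<lambda>v. if c' v \<ge> n then l0 else c' v) {0..<t}"
    have \<phi>2: "\<phi>2 \<in> H"
    proof (rule homsI)
      show "\<And>v. v \<ge> t \<Longrightarrow> \<phi>2 v = undefined" unfolding \<phi>2_def by simp
      show "\<And>v. v < t \<Longrightarrow> \<phi>2 v < n"
      proof -
        fix v assume v: "v < t"
        show "\<phi>2 v < n" using good[OF v] unfolding \<phi>2_def NI_def using v by auto
      qed
      fix x y assume e: "(x,y) \<in> E"
      have xy: "x < t" "y < t" using Et[OF e] by auto
      have ne: "c' x \<noteq> c' y" using homsD(2)[OF c' e] .
      show "adj (\<phi>2 x) (\<phi>2 y)"
      proof (cases "c' x < n"; cases "c' y < n")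
        assume lx: "c' x < n" and ly: "c' y < n"
        have gx: "NI (c' x)" "rep (c' x) = c' x" and gy: "NI (c' y)" "rep (c' y) = c' y"
          using good[OF xy(1)] good[OF xy(2)] lx ly by auto
        have "adj (c' x) (c' y)"
        proof (rule ccontr)
          assume "\<not> adj (c' x) (c' y)"
          hence "rep (c' x) = rep (c' y)" using rep_eq gx gy by blast
          thus False using gx gy ne by simp
        qed
        thus ?thesis unfolding \<phi>2_def using xy lx ly by simp
      next
        assume lx: "c' x < n" and ly: "\<not> c' y < n"
        have gx: "NI (c' x)" and gl: "NI l0" "adj l0 l0" using good[OF xy(1)] good[OF xy(2)] lx ly by auto
        have "adj l0 (c' x)" using loop_adj[OF gl(1) gx gl(2)] .
        hence "adj (c' x) l0" using symNI[OF gl(1) gx] by simp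
        thus ?thesis unfolding \<phi>2_def using xy lx ly by simp
      next
        assume lx: "\<not> c' x < n" and ly: "c' y < n"
        have gy: "NI (c' y)" and gl: "NI l0" "adj l0 l0" using good[OF xy(1)] good[OF xy(2)] lx ly by auto
        have "adj l0 (c' y)" using loop_adj[OF gl(1) gy gl(2)] .
        thus ?thesis unfolding \<phi>2_def using xy lx ly by simp
      next
        assume lx: "\<not> c' x < n" and ly: "\<not> c' y < n"
        have gl: "adj l0 l0" using good[OF xy(1)] lx by auto
        thus ?thesis unfolding \<phi>2_def using xy lx ly by simp
      qed
    qed
    have blk2: "\<And>v. v < t \<Longrightarrow> blk (\<phi>2 v) = cblk (c' v)"
    proof -
      fix v assume v: "v < t"
      show "blk (\<phi>2 v) = cblk (c' v)"
      proof (cases "c' v < n")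
        case True
        hence "NI (c' v)" "\<not> adj (c' v) (c' v)" "rep (c' v) = c' v" using good[OF v] by auto
        thus ?thesis unfolding \<phi>2_def cblk_def using v True blk_less by auto
      next
        case False
        hence "NI l0" "adj l0 l0" using good[OF v] by auto
        thus ?thesis unfolding \<phi>2_def cblk_def using v False blk_n by auto
      qed
    qed
    define a' where "a' = a(i := a i - 1, j := a j + 1)"
    have a'NI: "\<And>x. a' x > 0 \<Longrightarrow> NI x"
    proof -
      fix x assume x: "a' x > 0"
      show "NI x"
      proof (cases "x = j")
        case True thus ?thesis using NIj by simp
      next
        case False
        hence "a x > 0" using x unfolding a'_def by (cases "x = i") auto
        thus ?thesis using cnt_NI[OF \<phi>] a_eq by simp
      qed
    qed
    have bs: "\<And>z. (\<Sum>x\<in>{x\<in>NIs. blk x = z}. a' x) = card {v\<in>{0..<t}. blk (\<phi>2 v) = z}"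
    proof -
      fix z
      define Y where "Y = {y. y < n + t \<and> cblk y = z}"
      have finY: "finite Y" unfolding Y_def by simp
      have r1: "card {v\<in>{0..<t}. blk (\<phi>2 v) = z} = (\<Sum>y\<in>Y. cnt t c' y)"
      proof -
        have "{v\<in>{0..<t}. blk (\<phi>2 v) = z} = {v\<in>{0..<t}. cblk (c' v) = z}" using blk2 by auto
        thus ?thesis unfolding Y_def using card_group[of t c' "n + t" cblk z] c'lt by simp
      qed
      have colt: "\<And>v. v < t \<Longrightarrow> col \<phi> v < n + t" using homsD(1)[OF col_hom[OF \<phi>]] .
      have r2: "SB \<phi> z = (\<Sum>y\<in>Y. cnt t (col \<phi>) y)"
      proof -
        have "{v\<in>{0..<t}. blk (\<phi> v) = z} = {v\<in>{0..<t}. cblk (col \<phi> v) = z}" using col_cblk[OF \<phi>] by auto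
        thus ?thesis unfolding SB_def Y_def using card_group[of t "col \<phi>" "n + t" cblk z] colt by simp
      qed
      have u1: "(\<Sum>x\<in>X z. a' x) + (if i \<in> X z then 1 else 0) = (\<Sum>x\<in>X z. a x) + (if j \<in> X z then 1 else 0)"
        unfolding a'_def using sum_upd2[OF finX, of a i j] ab ji by simp
      have u2: "(\<Sum>y\<in>Y. cnt t c' y) + (if k \<in> Y then 1 else 0) = (\<Sum>y\<in>Y. cnt t (col \<phi>) y) + (if m \<in> Y then 1 else 0)"
      proof -
        have k1: "cnt t (col \<phi>) k \<ge> 1" using kgt by simp
        show ?thesis using sum_upd2[of Y "cnt t (col \<phi>)" k m, OF finY k1 km] unfolding c'eq .
      qed
      have e1: "(i \<in> X z) = (k \<in> Y)" unfolding X_def Y_def NIs_def using NIi kN kblk \<beta>_def by auto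
      have e2: "(j \<in> X z) = (m \<in> Y)" unfolding X_def Y_def NIs_def cblk_def using NIj blkj mn by auto
      have "(\<Sum>x\<in>X z. a x) = (\<Sum>y\<in>Y. cnt t (col \<phi>) y)" using SBa r2 by simp
      hence "(\<Sum>x\<in>X z. a' x) = (\<Sum>y\<in>Y. cnt t c' y)" using u1 u2 e1 e2 by simp
      thus "(\<Sum>x\<in>{x\<in>NIs. blk x = z}. a' x) = card {v\<in>{0..<t}. blk (\<phi>2 v) = z}"
        using r1 unfolding X_def by simp
    qed
    have "a' \<in> cset t E n adj" using redistribute[OF \<phi>2 a'NI bs] .
    thus ?thesis using ajb unfolding a'_def by blast
  qed
qed

end

theorem proposition3p3:
  fixes t :: nat and E :: "(nat \<times> nat) set"
  assumes "t \<ge> 2"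
    and "simple_graph t E"
    and "connected_graph t E"
    and "\<exists>q\<ge>t. M_convex (hsupport t E q (complete_graph q))"
  shows "\<forall>n (G :: real mat). antiferromagnetic n G \<longrightarrow> M_convex (hsupport t E n G)"
proof (intro allI impI)
  fix n and G :: "real mat"
  assume af: "antiferromagnetic n G"
  have E: "E \<subseteq> {(u,v). u < v \<and> v < t}" using assms(2) unfolding simple_graph_def .
  have Ebox: "E \<subseteq> {0..<t} \<times> {0..<t}" using E by auto
  have inc: "\<exists>v. (u,v) \<in> E \<or> (v,u) \<in> E" if u: "u < t" for u
  proof -
    define v where "v = (if u = 0 then 1 else (0::nat))"
    have v: "v < t" "v \<noteq> u" unfolding v_def using assms(1) u by auto
    have "(\<lambda>x y. (x, y) \<in> E \<or> (y, x) \<in> E)\<^sup>*\<^sup>* u v"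
      using assms(3) u v unfolding connected_graph_def by blast
    thus ?thesis
    proof (cases rule: converse_rtranclpE)
      case base thus ?thesis using v by simp
    next
      case (step w) thus ?thesis by blast
    qed
  qed
  obtain q where q: "q \<ge> t" "M_convex (hsupport t E q (complete_graph q))" using assms(4) by blast
  have Kq: "M_convex (cset t E q (\<lambda>i j. i \<noteq> j))" using q(2) hsupport_K[OF Ebox] by simp
  have K: "\<And>N. M_convex (cset t E N (\<lambda>i j. i \<noteq> j))" using K_all[OF Ebox Kq q(1)] .
  have G: "G \<in> carrier_mat n n" and symT: "transpose_mat G = G"
    and nn: "\<forall>i<n. \<forall>j<n. G $$ (i,j) \<ge> 0"
    using af unfolding antiferromagnetic_def weighted_graph_def by auto
  have symG: "\<And>a b. a < n \<Longrightarrow> b < n \<Longrightarrow> G $$ (b,a) = G $$ (a,b)"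
    using symT G by (metis carrier_matD index_transpose_mat(1))
  interpret comb t E n "\<lambda>i j. G $$ (i,j) > 0"
  proof
    show "E \<subseteq> {(u,v). u < v \<and> v < t}" using E .
    show "\<And>u. u < t \<Longrightarrow> \<exists>v. (u,v) \<in> E \<or> (v,u) \<in> E" using inc by blast
    show "\<And>x y. x < n \<Longrightarrow> y < n \<Longrightarrow> (G $$ (x,y) > 0) = (G $$ (y,x) > 0)" using symG by simp
    fix x y z assume xyz: "x < n" "y < n" "z < n" and l: "\<exists>l<n. G $$ (y,l) > 0"
      and nxy: "\<not> G $$ (x,y) > 0" and nyz: "\<not> G $$ (y,z) > 0"
    obtain l where l: "l < n" "G $$ (y,l) > 0" using l by blast
    have "G $$ (x,y) = 0" "G $$ (y,z) = 0" using nxy nyz nn xyz by (auto simp: not_less order.antisym)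
    hence "G $$ (x,z) = 0" using af_trans[OF af xyz(1,2,3) l(1) l(2)] by simp
    thus "\<not> G $$ (x,z) > 0" by simp
  qed
  have "M_convex (cset t E n (\<lambda>i j. G $$ (i,j) > 0))" using main_M[OF K] .
  thus "M_convex (hsupport t E n G)" using hsupport_eq[OF Ebox nn] by simp
qed

end
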